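(* Let $G$ be a tree of order $n \ge 2$ with stability number $\alpha$. Then \[ F(G) \le 3^{\,n-\alpha-1}\, 2^{\,2\alpha - n + 1} + 2^{\,n-\alpha-1}, \] with equality if and only if $G \simeq TC_{n,\alpha}$. Moreover, for $n/2 \le \alpha \le n-1$, $f_{\mathsf{TC}}(n,\alpha) = 3^{\,n-\alpha-1}\, 2^{\,2\alpha - n + 1} + 2^{\,n-\alpha-1}$.
   Context: The Fibonacci index $F(G)$ is the number of stable sets of $G$, including the empty set; $\alpha(G)$ is the stability number. For integers $1\le \alpha\le n$, the Turán graph $T_{n,\alpha}$ is the disjoint union of $\alpha$ cliques whose orders sum to $n$ and differ pairwise by at most one. For $1\le\alpha\le n-1$, the Turán-connected graph $TC_{n,\alpha}$ is obtained from $T_{n,\alpha}$ by choosing a vertex $v$ in one clique of order $\lceil n/\alpha\rceil$ and adding $\alpha-1$ edges joining $v$ to one vertex of each of the other $\alpha-1$ cliques; it is unique up to isomorphism. Define $f_{\mathsf{TC}}(n,\alpha)=F(TC_{n,\alpha})$. *)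

theory Defs
  imports Main
begin

definition simple_graph :: "'a set \<Rightarrow> 'a set set \<Rightarrow> bool" where
  "simple_graph V E \<longleftrightarrow> finite V \<and> (\<forall>e\<in>E. e \<subseteq> V \<and> card e = 2)"

definition stable_set :: "'a set \<Rightarrow> 'a set set \<Rightarrow> 'a set \<Rightarrow> bool" where
  "stable_set V E S \<longleftrightarrow> S \<subseteq> V \<and> (\<forall>x\<in>S. \<forall>y\<in>S. {x, y} \<notin> E)"

definition fib_index :: "'a set \<Rightarrow> 'a set set \<Rightarrow> nat" where
  "fib_index V E = card {S. stable_set V E S}"

definition stab_num :: "'a set \<Rightarrow> 'a set set \<Rightarrow> nat" where
  "stab_num V E = Max (card ` {S. stable_set V E S})"

definition connected_graph :: "'a set \<Rightarrow> 'a set set \<Rightarrow> bool" where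
  "connected_graph V E \<longleftrightarrow> V \<noteq> {} \<and>
     (\<forall>x\<in>V. \<forall>y\<in>V. (\<lambda>a b. {a, b} \<in> E)\<^sup>*\<^sup>* x y)"

definition has_cycle :: "'a set \<Rightarrow> 'a set set \<Rightarrow> bool" where
  "has_cycle V E \<longleftrightarrow> (\<exists>vs. length vs \<ge> 3 \<and> distinct vs \<and> set vs \<subseteq> V \<and>
     (\<forall>i. i + 1 < length vs \<longrightarrow> {vs ! i, vs ! (i + 1)} \<in> E) \<and>
     {last vs, hd vs} \<in> E)"

definition is_tree :: "'a set \<Rightarrow> 'a set set \<Rightarrow> bool" where
  "is_tree V E \<longleftrightarrow> simple_graph V E \<and> connected_graph V E \<and> \<not> has_cycle V E"

definition graph_iso :: "'a set \<Rightarrow> 'a set set \<Rightarrow> 'b set \<Rightarrow> 'b set set \<Rightarrow> bool" where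
  "graph_iso V E V' E' \<longleftrightarrow> (\<exists>f. bij_betw f V V' \<and>
     (\<forall>x\<in>V. \<forall>y\<in>V. {x, y} \<in> E \<longleftrightarrow> {f x, f y} \<in> E'))"

text \<open>Turan-connected graph TC_{n,alpha}: cliques i < alpha on vertices (i,j), j < size i,
  with sizes n div alpha (+1 for i < n mod alpha), so clique 0 has order ceil(n/alpha);
  the vertex (0,0) is joined to (i,0) for every 0 < i < alpha.\<close>
definition tc_size :: "nat \<Rightarrow> nat \<Rightarrow> nat \<Rightarrow> nat" where
  "tc_size n a i = n div a + (if i < n mod a then 1 else 0)"

definition TC_V :: "nat \<Rightarrow> nat \<Rightarrow> (nat \<times> nat) set" where
  "TC_V n a = {(i, j). i < a \<and> j < tc_size n a i}"

definition TC_E :: "nat \<Rightarrow> nat \<Rightarrow> (nat \<times> nat) set set" where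
  "TC_E n a =
     {{(i, j), (i, j')} | i j j'. (i, j) \<in> TC_V n a \<and> (i, j') \<in> TC_V n a \<and> j \<noteq> j'}
   \<union> {{(0, 0), (i, 0)} | i. 0 < i \<and> i < a}"

definition f_TC :: "nat \<Rightarrow> nat \<Rightarrow> nat" where
  "f_TC n a = fib_index (TC_V n a) (TC_E n a)"

end

theory Submission
  imports Defs
begin

definition nbrs :: "'a set set \<Rightarrow> 'a set \<Rightarrow> 'a \<Rightarrow> 'a set" where
  "nbrs E X y = {z \<in> X. {y,z} \<in> E}"

definition matching :: "'a set set \<Rightarrow> 'a set \<Rightarrow> bool" where
  "matching E X \<longleftrightarrow> (\<forall>y\<in>X. \<forall>a\<in>nbrs E X y. \<forall>b\<in>nbrs E X y. a = b)"

definition NL :: "'a set set \<Rightarrow> bool" where "NL E \<longleftrightarrow> (\<forall>x. {x} \<notin> E)"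

definition hh :: "nat \<Rightarrow> nat \<Rightarrow> nat" where "hh m a = 3^(m-a) * 2^(2*a-m)"
definition gg :: "nat \<Rightarrow> nat \<Rightarrow> nat" where
  "gg n a = 3 ^ (n - a - 1) * 2 ^ (2 * a - n + 1) + 2 ^ (n - a - 1)"

lemma stable_sub: "stable_set X E S \<Longrightarrow> S \<subseteq> X" by (simp add: stable_set_def)

lemma finite_stables: "finite X \<Longrightarrow> finite {S. stable_set X E S}"
  by (rule finite_subset[of _ "Pow X"]) (auto simp: stable_set_def)

lemma empty_stable: "stable_set X E {}" by (simp add: stable_set_def)

lemma stab_ge: "finite X \<Longrightarrow> stable_set X E S \<Longrightarrow> card S \<le> stab_num X E"
  unfolding stab_num_def by (rule Max_ge) (auto simp: finite_stables)

lemma stab_ex: "finite X \<Longrightarrow> \<exists>S. stable_set X E S \<and> card S = stab_num X E"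
proof -
  assume f: "finite X"
  have "stab_num X E \<in> card ` {S. stable_set X E S}"
    unfolding stab_num_def using f empty_stable
    by (intro Max_in) (auto simp: finite_stables)
  then show ?thesis by auto
qed

lemma stab_le_card: "finite X \<Longrightarrow> stab_num X E \<le> card X"
  using stab_ex[of X E] by (metis card_mono stable_sub)

lemma stable_mono: "stable_set X E S \<Longrightarrow> X \<subseteq> Y \<Longrightarrow> stable_set Y E S"
  by (auto simp: stable_set_def)

lemma stab_mono: "finite Y \<Longrightarrow> X \<subseteq> Y \<Longrightarrow> stab_num X E \<le> stab_num Y E"
  using stab_ex[of X E] stab_ge[of Y E] stable_mono finite_subset by metis

lemma L1:
  assumes f: "finite X" and nl: "NL E" and y: "y \<in> X"
  shows "fib_index X E = fib_index (X - {y}) E + fib_index (X - insert y (nbrs E X y)) E"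
proof -
  let ?N = "X - insert y (nbrs E X y)"
  have eq: "{S. stable_set X E S} = {S. stable_set (X-{y}) E S} \<union> insert y ` {S. stable_set ?N E S}"
  proof (rule set_eqI, rule iffI)
    fix S assume "S \<in> {S. stable_set X E S}"
    hence S: "stable_set X E S" by simp
    show "S \<in> {S. stable_set (X-{y}) E S} \<union> insert y ` {S. stable_set ?N E S}"
    proof (cases "y \<in> S")
      case True
      have "stable_set ?N E (S - {y})" using S True unfolding stable_set_def nbrs_def by auto
      moreover have "S = insert y (S - {y})" using True by auto
      ultimately show ?thesis by blast
    next
      case False
      thus ?thesis using S unfolding stable_set_def by auto
    qed
  next
    fix S assume "S \<in> {S. stable_set (X-{y}) E S} \<union> insert y ` {S. stable_set ?N E S}"
    then show "S \<in> {S. stable_set X E S}"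
    proof
      assume "S \<in> {S. stable_set (X-{y}) E S}" thus ?thesis by (auto simp: stable_set_def)
    next
      assume "S \<in> insert y ` {S. stable_set ?N E S}"
      then obtain T where T: "stable_set ?N E T" "S = insert y T" by auto
      have yy: "{y,y} \<notin> E" using nl by (simp add: NL_def)
      have "\<forall>t\<in>T. {y,t} \<notin> E \<and> {t,y} \<notin> E" using T(1) y unfolding stable_set_def nbrs_def
        by (auto simp: insert_commute)
      thus ?thesis using T y yy unfolding stable_set_def by auto
    qed
  qed
  have disj: "{S. stable_set (X-{y}) E S} \<inter> insert y ` {S. stable_set ?N E S} = {}"
    by (auto simp: stable_set_def)
  have inj: "inj_on (insert y) {S. stable_set ?N E S}"
    unfolding inj_on_def stable_set_def by blast
  have "fib_index X E = card ({S. stable_set (X-{y}) E S} \<union> insert y ` {S. stable_set ?N E S})"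
    unfolding fib_index_def eq ..
  also have "\<dots> = fib_index (X - {y}) E + card (insert y ` {S. stable_set ?N E S})"
    unfolding fib_index_def
    by (rule card_Un_disjoint) (use f disj in \<open>auto intro: finite_stables\<close>)
  also have "card (insert y ` {S. stable_set ?N E S}) = fib_index ?N E"
    unfolding fib_index_def using card_image[OF inj] .
  finally show ?thesis .
qed

lemma L2:
  assumes f: "finite X" and nl: "NL E" and y: "y \<in> X"
  shows "stab_num X E = max (stab_num (X - {y}) E) (1 + stab_num (X - insert y (nbrs E X y)) E)"
proof -
  let ?N = "X - insert y (nbrs E X y)"
  have a: "stab_num (X - {y}) E \<le> stab_num X E" using stab_mono f by blast
  obtain T where T: "stable_set ?N E T" "card T = stab_num ?N E" using stab_ex f by blast
  have yy: "{y,y} \<notin> E" using nl by (simp add: NL_def)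
  have "\<forall>t\<in>T. {y,t} \<notin> E \<and> {t,y} \<notin> E" using T(1) y unfolding stable_set_def nbrs_def
    by (auto simp: insert_commute)
  hence st: "stable_set X E (insert y T)" using T y yy unfolding stable_set_def by auto
  have fT: "finite T" using T(1) f by (meson finite_Diff finite_subset stable_sub)
  have yT: "y \<notin> T" using T(1) stable_sub by blast
  have b: "1 + stab_num ?N E \<le> stab_num X E"
    using stab_ge[OF f st] T fT yT by simp
  obtain S where S: "stable_set X E S" "card S = stab_num X E" using stab_ex f by blast
  have c: "stab_num X E \<le> max (stab_num (X - {y}) E) (1 + stab_num ?N E)"
  proof (cases "y \<in> S")
    case True
    have "stable_set ?N E (S - {y})" using S True unfolding stable_set_def nbrs_def by auto
    hence "card (S - {y}) \<le> stab_num ?N E" using f stab_ge by blast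
    moreover have "card S = card (S - {y}) + 1" using True S(1) f
      by (metis add.commute card_Suc_Diff1 finite_subset plus_1_eq_Suc stable_sub)
    ultimately show ?thesis using S by simp
  next
    case False
    hence "stable_set (X-{y}) E S" using S unfolding stable_set_def by auto
    hence "card S \<le> stab_num (X-{y}) E" using f stab_ge by blast
    thus ?thesis using S by simp
  qed
  show ?thesis using a b c by simp
qed

lemma hh_form: "m = a + j \<Longrightarrow> 2*a = m + d \<Longrightarrow> hh m a = 3^j * 2^d"
  unfolding hh_def by simp

lemma hh00: "hh 0 0 = 1" by (simp add: hh_def)

lemma N1: "m \<le> 2*a \<Longrightarrow> hh (Suc m) (Suc a) = 2 * hh m a"
  unfolding hh_def by (simp add: Suc_diff_le)

lemma N2: "m \<le> 2*a \<Longrightarrow> a \<le> m \<Longrightarrow> hh (m+2) (a+1) = 3 * hh m a"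
proof -
  assume h: "m \<le> 2*a" "a \<le> m"
  define j where "j = m - a"
  define d where "d = 2*a - m"
  have j: "m = a + j" using h j_def by simp
  have d: "2*a = m + d" using h d_def by simp
  show ?thesis using hh_form[OF j d] hh_form[of "m+2" "a+1" "j+1" d] j d by simp
qed

lemma N4: "m + 1 \<le> 2*a \<Longrightarrow> a \<le> m \<Longrightarrow> hh (m+1) a + hh m a < hh (m+2) (a+1)"
proof -
  assume h: "m + 1 \<le> 2*a" "a \<le> m"
  define j where "j = m - a"
  define d where "d = 2*a - m - 1"
  have j: "m = a + j" using h j_def by simp
  have d: "2*a = m + 1 + d" using h d_def by simp
  have "hh (m+1) a = 3^(j+1) * 2^d" by (rule hh_form) (use j d in auto)
  moreover have "hh m a = 3^j * 2^(d+1)" by (rule hh_form) (use j d in auto)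
  moreover have "hh (m+2) (a+1) = 3^(j+1) * 2^(d+1)" by (rule hh_form) (use j d in auto)
  moreover have "(3::nat)^(j+1) * 2^d + 3^j * 2^(d+1) < 3^(j+1) * 2^(d+1)"
  proof -
    have p: "(0::nat) < 3^j * 2^d" by simp
    have "(3::nat)^(j+1) * 2^d + 3^j * 2^(d+1) = 5 * (3^j*2^d)" by simp
    moreover have "(3::nat)^(j+1) * 2^(d+1) = 6 * (3^j*2^d)" by simp
    ultimately show ?thesis using p by linarith
  qed
  ultimately show ?thesis by simp
qed

lemma hh_step: "m \<le> 2*a \<Longrightarrow> a < m \<Longrightarrow> hh m a < hh m (Suc a)"
proof -
  assume h: "m \<le> 2*a" "a < m"
  define j where "j = m - Suc a"
  define d where "d = 2*a - m"
  have j: "m = Suc a + j" using h j_def by simp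
  have d: "2*a = m + d" using h d_def by simp
  have "hh m a = 3^(Suc j) * 2^d" by (rule hh_form) (use j d in auto)
  moreover have "hh m (Suc a) = 3^j * 2^(d+2)" by (rule hh_form) (use j d in auto)
  moreover have "(3::nat)^(Suc j) * 2^d < 3^j * 2^(d+2)"
  proof -
    have p: "(0::nat) < 3^j * 2^d" by simp
    have "(3::nat)^(Suc j) * 2^d = 3 * (3^j*2^d)" by simp
    moreover have "(3::nat)^j * 2^(d+2) = 4 * (3^j*2^d)" by (simp add: power_add)
    ultimately show ?thesis using p by linarith
  qed
  ultimately show ?thesis by simp
qed

lemma hh_mono_strict: "m \<le> 2*a \<Longrightarrow> a < b \<Longrightarrow> b \<le> m \<Longrightarrow> hh m a < hh m b"
proof (induction b)
  case 0 thus ?case by simp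
next
  case (Suc b)
  show ?case
  proof (cases "a = b")
    case True thus ?thesis using Suc hh_step by simp
  next
    case False
    hence "hh m a < hh m b" using Suc by simp
    moreover have "hh m b < hh m (Suc b)" using Suc False by (intro hh_step) auto
    ultimately show ?thesis by simp
  qed
qed

lemma hh_mono: "m \<le> 2*a \<Longrightarrow> a \<le> b \<Longrightarrow> b \<le> m \<Longrightarrow> hh m a \<le> hh m b"
  using hh_mono_strict by (metis le_less)

lemma caseA_num: "m + 1 \<le> 2*a \<Longrightarrow> a \<le> m \<Longrightarrow> gg (m+1) a + hh m a = gg (m+2) (a+1)"
proof -
  assume h: "m + 1 \<le> 2*a" "a \<le> m"
  define j where "j = m - a"
  define d where "d = 2*a - m - 1"
  have j: "m = a + j" using h j_def by simp
  have d: "2*a = m + 1 + d" using h d_def by simp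
  have "hh m a = 3^j * 2^(d+1)" by (rule hh_form) (use j d in auto)
  moreover have "gg (m+1) a = 3^j * 2^(d+1) + 2^j" unfolding gg_def using j d by simp
  moreover have "gg (m+2) (a+1) = 3^j * 2^(d+2) + 2^j" unfolding gg_def using j d by simp
  ultimately show ?thesis by simp
qed

lemma caseB_num: "m \<le> 2*a \<Longrightarrow> a + 1 \<le> m \<Longrightarrow> 2 * gg m a + hh (m-1) a = gg (m+2) (a+1)"
proof -
  assume h: "m \<le> 2*a" "a + 1 \<le> m"
  define j where "j = m - a - 1"
  define d where "d = 2*a - m"
  have j: "m = a + 1 + j" using h j_def by simp
  have d: "2*a = m + d" using h d_def by simp
  have "hh (m-1) a = 3^j * 2^(d+1)" by (rule hh_form) (use j d in auto)
  moreover have "gg m a = 3^j * 2^(d+1) + 2^j" unfolding gg_def using j d by simp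
  moreover have "gg (m+2) (a+1) = 3^(j+1) * 2^(d+1) + 2^(j+1)" unfolding gg_def using j d by simp
  ultimately show ?thesis by simp
qed

lemma spider_num: "1 \<le> s \<Longrightarrow> gg (1 + s + 2*f) (s + f) = hh (s + 2*f) (s+f) + 2^f"
proof -
  assume "1 \<le> s"
  then obtain s' where s': "s = Suc s'" by (cases s) auto
  have "hh (s + 2*f) (s+f) = 3^f * 2^s" by (rule hh_form) auto
  moreover have "gg (1 + s + 2*f) (s + f) = 3^f * 2^s + 2^f" unfolding gg_def s' by simp
  ultimately show ?thesis by simp
qed

definition ispath :: "'a set set \<Rightarrow> 'a set \<Rightarrow> 'a list \<Rightarrow> bool" where
  "ispath E X P \<longleftrightarrow> P \<noteq> [] \<and> distinct P \<and> set P \<subseteq> X \<and>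
     (\<forall>i. i+1 < length P \<longrightarrow> {P!i, P!(i+1)} \<in> E)"

lemma cyc:
  assumes "ispath E X P" "j + 2 < length P" "{last P, P!j} \<in> E"
  shows "has_cycle X E"
  unfolding has_cycle_def
proof (intro exI[of _ "drop j P"] conjI allI impI)
  show "3 \<le> length (drop j P)" using assms by simp
  show "distinct (drop j P)" using assms by (simp add: ispath_def)
  show "set (drop j P) \<subseteq> X" using assms unfolding ispath_def by (meson order_trans set_drop_subset)
  fix i assume "i + 1 < length (drop j P)"
  thus "{drop j P ! i, drop j P ! (i + 1)} \<in> E" using assms unfolding ispath_def
    by (simp add: add.assoc)
next
  show "{last (drop j P), hd (drop j P)} \<in> E" using assms by (simp add: hd_drop_conv_nth)
qed

lemma ispath_take: "ispath E X P \<Longrightarrow> 0 < k \<Longrightarrow> ispath E X (take k P)"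
  unfolding ispath_def by (auto dest: in_set_takeD)

lemma ispath_snoc:
  assumes "ispath E X P" "t \<in> X" "t \<notin> set P" "{last P, t} \<in> E"
  shows "ispath E X (P @ [t])"
  unfolding ispath_def
proof (intro conjI allI impI)
  show "P @ [t] \<noteq> []" by simp
  show "distinct (P @ [t])" using assms by (simp add: ispath_def)
  show "set (P @ [t]) \<subseteq> X" using assms by (simp add: ispath_def)
  fix i assume i: "i + 1 < length (P @ [t])"
  show "{(P @ [t]) ! i, (P @ [t]) ! (i + 1)} \<in> E"
  proof (cases "i + 1 < length P")
    case True thus ?thesis using assms by (simp add: ispath_def nth_append)
  next
    case False
    hence "i + 1 = length P" using i by simp
    moreover have "P \<noteq> []" using assms by (simp add: ispath_def)
    ultimately have "i = length P - 1" "last P = P ! (length P - 1)" by (auto simp: last_conv_nth)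
    thus ?thesis using assms \<open>i + 1 = length P\<close> by (simp add: nth_append)
  qed
qed

lemma last_take: "0 < k \<Longrightarrow> k \<le> length P \<Longrightarrow> last (take k P) = P ! (k - 1)"
proof -
  assume k: "0 < k" "k \<le> length P"
  hence ne: "take k P \<noteq> []" by auto
  have "last (take k P) = take k P ! (length (take k P) - 1)" using ne by (rule last_conv_nth)
  also have "\<dots> = P ! (k-1)" using k by simp
  finally show ?thesis .
qed

lemma ispath_len: "finite X \<Longrightarrow> ispath E X P \<Longrightarrow> length P < card X + 1"
  unfolding ispath_def by (metis card_mono distinct_card less_Suc_eq_le Suc_eq_plus1)

lemma esym: "{a,b} \<in> E \<Longrightarrow> {b,a} \<in> E" by (metis insert_commute)

lemma maxleaf:
  assumes f: "finite X" and nl: "NL E" and ac: "\<not> has_cycle X E"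
    and P: "ispath E X P" and mx: "\<forall>Q. ispath E X Q \<longrightarrow> length Q \<le> length P"
    and L: "2 \<le> length P"
  shows "nbrs E X (last P) = {P ! (length P - 2)}"
proof -
  obtain K where K: "length P = K + 2" using L by (metis add.commute le_Suc_ex)
  have pe: "\<And>i. i+1 < length P \<Longrightarrow> {P!i, P!(i+1)} \<in> E" using P unfolding ispath_def by blast
  have ne: "P \<noteq> []" using K by auto
  have z: "last P = P ! (K+1)" using K last_conv_nth[OF ne] by simp
  have e: "{P!K, P!(K+1)} \<in> E" using pe[of K] K by simp
  have wX: "P!K \<in> X" using P K unfolding ispath_def by (simp add: subset_iff)
  have "{last P, P!K} \<in> E" using e z esym by metis
  hence "P ! K \<in> nbrs E X (last P)" using wX unfolding nbrs_def by blast
  moreover have "t = P ! K" if t: "t \<in> nbrs E X (last P)" for t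
  proof -
    have tX: "t \<in> X" and te: "{last P, t} \<in> E" using t unfolding nbrs_def by auto
    have "t \<in> set P"
    proof (rule ccontr)
      assume tP: "t \<notin> set P"
      have "ispath E X (P @ [t])" using ispath_snoc[OF P tX tP te] .
      hence "length (P @ [t]) \<le> length P" using mx by blast
      thus False by simp
    qed
    then obtain j where j: "j < length P" "t = P!j" by (auto simp: in_set_conv_nth)
    have "j \<noteq> K + 1" using te z j nl by (auto simp: NL_def)
    moreover have "\<not> j + 2 < length P"
    proof
      assume j2: "j + 2 < length P"
      have "{last P, P!j} \<in> E" using te unfolding j(2) .
      thus False using cyc[OF P j2] ac by blast
    qed
    ultimately have "j = K" using j K by linarith
    thus ?thesis using j by simp
  qed
  ultimately have "nbrs E X (last P) = {P!K}" by blast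
  moreover have "length P - 2 = K" using K by simp
  ultimately show ?thesis by simp
qed

lemma PL:
  assumes f: "finite X" and nl: "NL E" and ac: "\<not> has_cycle X E"
    and e: "a \<in> X" "b \<in> X" "{a,b} \<in> E"
  shows "\<exists>u w x. u \<in> X \<and> nbrs E X u = {w} \<and> (\<forall>t \<in> nbrs E X w - {x}. nbrs E X t = {w})"
proof -
  have ab: "a \<noteq> b" using e nl by (auto simp: NL_def)
  have p0: "ispath E X [a,b]" using e ab unfolding ispath_def by (auto simp: less_Suc_eq)
  obtain P where P: "ispath E X P" and mx: "\<forall>Q. ispath E X Q \<longrightarrow> length Q \<le> length P"
    using Lattices_Big.ex_has_greatest_nat[of "ispath E X" "[a,b]" length "card X + 1"] p0 ispath_len[OF f]
    by blast
  define L where "L = length P"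
  have L: "2 \<le> L" using mx p0 L_def by fastforce
  define w where "w = P ! (L-2)"
  define x where "x = (if 3 \<le> L then P ! (L-3) else last P)"
  have lf: "nbrs E X (last P) = {w}" using maxleaf[OF f nl ac P mx] L L_def w_def by simp
  have uX: "last P \<in> X" using P unfolding ispath_def by auto
  have "\<forall>t \<in> nbrs E X w - {x}. nbrs E X t = {w}"
  proof
    fix t assume t: "t \<in> nbrs E X w - {x}"
    have tX: "t \<in> X" and te: "{w, t} \<in> E" and tx: "t \<noteq> x" using t unfolding nbrs_def by auto
    show "nbrs E X t = {w}"
    proof (cases "t \<in> set P")
      case True
      then obtain j where j: "j < L" "t = P!j" using L_def by (metis in_set_conv_nth)
      show ?thesis
      proof (cases "j = L - 1")
        case True
        hence "t = last P" using j P unfolding ispath_def L_def by (simp add: last_conv_nth)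
        thus ?thesis using lf by simp
      next
        case False
        have "j \<noteq> L - 2" using te j w_def nl by (auto simp: NL_def)
        moreover have "j \<noteq> L - 3"
        proof
          assume j3: "j = L - 3"
          hence L3: "3 \<le> L" using \<open>j \<noteq> L - 2\<close> L by linarith
          hence "x = P ! j" unfolding x_def j3 by simp
          thus False using tx j(2) by simp
        qed
        ultimately have j3: "j + 2 < L - 1" using j False by linarith
        define P' where "P' = take (L-1) P"
        have P': "ispath E X P'" using ispath_take[OF P] L P'_def by simp
        have lP': "last P' = w" unfolding P'_def w_def using last_take[of "L-1" P] L L_def
          by (simp add: numeral_2_eq_2)
        have "P' ! j = t" unfolding P'_def using j j3 by simp
        hence "has_cycle X E" using cyc[OF P', of j] j3 lP' te P'_def L_def by simp
        thus ?thesis using ac by simp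
      qed
    next
      case False
      define Q where "Q = take (L-1) P @ [t]"
      have P': "ispath E X (take (L-1) P)" using ispath_take[OF P] L by simp
      have lP': "last (take (L-1) P) = w" unfolding w_def using last_take[of "L-1" P] L L_def
          by (simp add: numeral_2_eq_2)
      have Q: "ispath E X Q" unfolding Q_def
        using ispath_snoc[OF P' tX] False lP' te by (meson in_set_takeD)
      have lQ: "length Q = L" unfolding Q_def L_def using L L_def by simp
      have mxQ: "\<forall>R. ispath E X R \<longrightarrow> length R \<le> length Q" using mx lQ L_def by simp
      have "nbrs E X (last Q) = {Q ! (length Q - 2)}" using maxleaf[OF f nl ac Q mxQ] lQ L by simp
      moreover have "last Q = t" unfolding Q_def by simp
      moreover have "Q ! (length Q - 2) = w"
      proof -
        obtain K where K: "L = K + 2" using L by (metis add.commute le_Suc_ex)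
        have "length Q - 2 = K" using lQ K by simp
        moreover have "Q ! K = P ! K" unfolding Q_def using K L_def by (simp add: nth_append)
        moreover have "w = P ! K" unfolding w_def K by simp
        ultimately show ?thesis by simp
      qed
      ultimately show ?thesis by simp
    qed
  qed
  thus ?thesis using lf uX by blast
qed

lemma nbrs_sub: "nbrs E X y \<subseteq> X" by (auto simp: nbrs_def)
lemma nbrs_Diff: "nbrs E (X - A) y = nbrs E X y - A" by (auto simp: nbrs_def)
lemma dsym: "{a,b} = {b,a}" by blast

lemma nbrs_sym: "z \<in> nbrs E X y \<Longrightarrow> y \<in> X \<Longrightarrow> y \<in> nbrs E X z"
  unfolding nbrs_def by (simp add: dsym)
lemma nbrs_iff: "z \<in> nbrs E X y \<longleftrightarrow> z \<in> X \<and> {y,z} \<in> E" by (simp add: nbrs_def)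

lemma NL_ne: "NL E \<Longrightarrow> {a,b} \<in> E \<Longrightarrow> a \<noteq> b" by (auto simp: NL_def)

lemma matchingI: "(\<And>y. y \<in> X \<Longrightarrow> \<exists>c. nbrs E X y \<subseteq> {c}) \<Longrightarrow> matching E X"
  unfolding matching_def by blast

lemma matchingD: "matching E X \<Longrightarrow> y \<in> X \<Longrightarrow> a \<in> nbrs E X y \<Longrightarrow> nbrs E X y = {a}"
  unfolding matching_def by blast

lemma matching_sub: "matching E X \<Longrightarrow> Y \<subseteq> X \<Longrightarrow> matching E Y"
  unfolding matching_def nbrs_def by blast

lemma has_cycle_mono: "has_cycle Y E \<Longrightarrow> Y \<subseteq> X \<Longrightarrow> has_cycle X E"
  unfolding has_cycle_def by blast

lemma fib_empty: "fib_index {} E = 1"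
proof -
  have "{S. stable_set {} E S} = {{}}" by (auto simp: stable_set_def)
  thus ?thesis by (simp add: fib_index_def)
qed

lemma stab_empty: "stab_num {} E = 0" using stab_le_card[of "{}" E] by simp

lemma iso_fact:
  assumes f: "finite X" and nl: "NL E" and y: "y \<in> X" and n: "nbrs E X y = {}"
  shows "fib_index X E = 2 * fib_index (X - {y}) E \<and> stab_num X E = Suc (stab_num (X - {y}) E)"
  using L1[OF f nl y] L2[OF f nl y] n by simp

lemma leaf_fact:
  assumes f: "finite X" and nl: "NL E" and u: "u \<in> X" and n: "nbrs E X u = {w}"
  shows "fib_index X E = fib_index (X - {u}) E + fib_index (X - {u,w}) E"
    "stab_num X E = Suc (stab_num (X - {u,w}) E)"
    "stab_num (X - {u,w}) E \<le> stab_num (X - {u}) E"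
    "stab_num (X - {u}) E \<le> stab_num X E"
proof -
  have ins: "X - insert u (nbrs E X u) = X - {u,w}" using n by auto
  show "fib_index X E = fib_index (X - {u}) E + fib_index (X - {u,w}) E"
    using L1[OF f nl u] ins by simp
  have wX: "w \<in> X" using n nbrs_sub by fastforce
  have uw: "u \<noteq> w" using n nl unfolding nbrs_def NL_def by auto
  have w': "w \<in> X - {u}" using wX uw by simp
  have fY: "finite (X - {u})" using f by simp
  have e: "X - {u} - {w} = X - {u,w}" by auto
  have "stab_num (X - {u} - insert w (nbrs E (X - {u}) w)) E \<le> stab_num (X - {u,w}) E"
    using f by (intro stab_mono) auto
  hence b: "stab_num (X - {u}) E \<le> Suc (stab_num (X - {u,w}) E)"
    using L2[OF fY nl w'] e by simp
  show "stab_num X E = Suc (stab_num (X - {u,w}) E)"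
    using L2[OF f nl u] ins b by simp
  show "stab_num (X - {u,w}) E \<le> stab_num (X - {u}) E" using f by (intro stab_mono) auto
  show "stab_num (X - {u}) E \<le> stab_num X E" using f by (intro stab_mono) auto
qed

lemma MLm:
  assumes "finite X" "NL E" "matching E X"
  shows "card X \<le> 2 * stab_num X E \<and> fib_index X E = hh (card X) (stab_num X E)"
  using assms
proof (induction "card X" arbitrary: X rule: less_induct)
  case less
  show ?case
  proof (cases "X = {}")
    case True thus ?thesis by (simp add: fib_empty stab_empty hh00)
  next
    case False
    then obtain y where y: "y \<in> X" by auto
    show ?thesis
    proof (cases "nbrs E X y = {}")
      case True
      note iso = iso_fact[OF less(2,3) y True]
      have IH: "card (X - {y}) \<le> 2 * stab_num (X - {y}) E \<and>
          fib_index (X - {y}) E = hh (card (X - {y})) (stab_num (X - {y}) E)"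
      proof -
        have lt1: "card (X - {y}) < card X" using less(2) y by (rule card_Diff1_less)
        have m: "matching E (X - {y})" using matching_sub[OF less(4)] by blast
        show ?thesis using less(1)[OF lt1 _ less(3) m] less(2) by simp
      qed
      have cX: "card X = Suc (card (X - {y}))" using card_Suc_Diff1[OF less(2) y] by simp
      show ?thesis using IH iso cX N1 by simp
    next
      case False
      then obtain z where z: "z \<in> nbrs E X y" by auto
      have ny: "nbrs E X y = {z}" using matchingD[OF less(4) y z] .
      note lf = leaf_fact[OF less(2,3) y ny]
      have zX: "z \<in> X" using z nbrs_sub by fastforce
      have yz: "y \<noteq> z" using z less(3) unfolding nbrs_def NL_def by auto
      have nz: "nbrs E X z = {y}" using matchingD[OF less(4) zX nbrs_sym[OF z y]] .
      have nz': "nbrs E (X - {y}) z = {}" using nz by (simp add: nbrs_Diff)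
      have zY: "z \<in> X - {y}" using zX yz by simp
      note iso = iso_fact[OF _ less(3) zY nz']
      have e: "X - {y} - {z} = X - {y,z}" by auto
      have lt: "card (X - {y,z}) < card X" using less(2) y by (intro psubset_card_mono) auto
      have IH: "card (X - {y,z}) \<le> 2 * stab_num (X - {y,z}) E \<and>
          fib_index (X - {y,z}) E = hh (card (X - {y,z})) (stab_num (X - {y,z}) E)"
      proof -
        have m: "matching E (X - {y,z})" using matching_sub[OF less(4)] by blast
        show ?thesis using less(1)[OF lt _ less(3) m] less(2) by simp
      qed
      have cX: "card X = card (X - {y,z}) + 2"
      proof -
        have "{y,z} \<subseteq> X" using y zX by auto
        hence "card (X - {y,z}) = card X - 2" using less(2) yz by (simp add: card_Diff_subset)
        moreover have "2 \<le> card X"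
        proof -
          have "card {y,z} = 2" using yz by simp
          thus ?thesis using card_mono[OF less(2) \<open>{y,z} \<subseteq> X\<close>] by simp
        qed
        ultimately show ?thesis by simp
      qed
      have aZ: "stab_num (X - {y,z}) E \<le> card (X - {y,z})" using less(2) by (simp add: stab_le_card)
      have "fib_index X E = 3 * fib_index (X - {y,z}) E" using lf(1) iso less(2) e by simp
      thus ?thesis using IH cX lf(2) N2[OF _ aZ] by simp
    qed
  qed
qed

lemma card_minus2:
  assumes "finite X" "y \<in> X" "z \<in> X" "y \<noteq> z"
  shows "card X = card (X - {y,z}) + 2"
proof -
  have s: "{y,z} \<subseteq> X" using assms by auto
  hence "card (X - {y,z}) = card X - 2" using assms by (simp add: card_Diff_subset)
  moreover have "card {y,z} = 2" using assms by simp
  hence "2 \<le> card X" using card_mono[OF assms(1) s] by simp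
  ultimately show ?thesis by simp
qed

lemma FL:
  assumes "finite X" "NL E" "\<not> has_cycle X E"
  shows "card X \<le> 2 * stab_num X E \<and> fib_index X E \<le> hh (card X) (stab_num X E) \<and>
    (fib_index X E = hh (card X) (stab_num X E) \<longrightarrow> matching E X)"
  using assms
proof (induction "card X" arbitrary: X rule: less_induct)
  case less
  note f = less(2) and nl = less(3) and ac = less(4)
  have acs: "\<And>Y. Y \<subseteq> X \<Longrightarrow> \<not> has_cycle Y E" using ac has_cycle_mono by blast
  show ?case
  proof (cases "X = {}")
    case True thus ?thesis by (simp add: fib_empty stab_empty hh00 matching_def)
  next
    case False
    show ?thesis
    proof (cases "\<exists>a\<in>X. \<exists>b\<in>X. {a,b} \<in> E")
      case False
      obtain y where y: "y \<in> X" using \<open>X \<noteq> {}\<close> by auto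
      have ny: "nbrs E X y = {}" using False y unfolding nbrs_def by auto
      note iso = iso_fact[OF f nl y ny]
      have lt1: "card (X - {y}) < card X" using f y by (rule card_Diff1_less)
      have IH: "card (X - {y}) \<le> 2 * stab_num (X - {y}) E \<and>
          fib_index (X - {y}) E \<le> hh (card (X - {y})) (stab_num (X - {y}) E) \<and>
          (fib_index (X - {y}) E = hh (card (X - {y})) (stab_num (X - {y}) E) \<longrightarrow> matching E (X - {y}))"
        using less(1)[OF lt1 _ nl acs] f by simp
      have cX: "card X = Suc (card (X - {y}))" using card_Suc_Diff1[OF f y] by simp
      have mX: "matching E X" if m: "matching E (X - {y})"
      proof (rule matchingI)
        fix t assume t: "t \<in> X"
        show "\<exists>c. nbrs E X t \<subseteq> {c}"
        proof (cases "t = y")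
          case True thus ?thesis using ny by auto
        next
          case False
          have "nbrs E X t = nbrs E (X - {y}) t"
            using ny nbrs_sym[of y E X t] t unfolding nbrs_Diff by blast
          moreover have "t \<in> X - {y}" using t False by simp
          ultimately show ?thesis using m unfolding matching_def by blast
        qed
      qed
      show ?thesis using IH iso cX N1 mX by simp
    next
      case True
      then obtain a b where ab: "a \<in> X" "b \<in> X" "{a,b} \<in> E" by blast
      obtain u w x where u: "u \<in> X" and nu: "nbrs E X u = {w}"
        using PL[OF f nl ac ab] by blast
      note lf = leaf_fact[OF f nl u nu]
      have wX: "w \<in> X" using nu nbrs_sub by fastforce
      have uw: "u \<noteq> w" using nu nl unfolding nbrs_def NL_def by auto
      define Y where "Y = X - {u}"
      define Z where "Z = X - {u,w}"
      have ltY: "card Y < card X" unfolding Y_def using f u by (rule card_Diff1_less)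
      have ltZ: "card Z < card X" unfolding Z_def using f u by (intro psubset_card_mono) auto
      have IHY: "card Y \<le> 2 * stab_num Y E \<and> fib_index Y E \<le> hh (card Y) (stab_num Y E) \<and>
          (fib_index Y E = hh (card Y) (stab_num Y E) \<longrightarrow> matching E Y)"
        using less(1)[OF ltY _ nl acs] f Y_def by simp
      have IHZ: "card Z \<le> 2 * stab_num Z E \<and> fib_index Z E \<le> hh (card Z) (stab_num Z E) \<and>
          (fib_index Z E = hh (card Z) (stab_num Z E) \<longrightarrow> matching E Z)"
        using less(1)[OF ltZ _ nl acs] f Z_def by simp
      define m where "m = card Z"
      define a where "a = stab_num Z E"
      define \<beta> where "\<beta> = stab_num Y E"
      have cX: "card X = m + 2" unfolding m_def Z_def using card_minus2[OF f u wX uw] .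
      have cY: "card Y = m + 1" unfolding Y_def using card_Suc_Diff1[OF f u] cX by simp
      have aX: "stab_num X E = a + 1" using lf(2) a_def Z_def by simp
      have bnd: "a \<le> \<beta>" "\<beta> \<le> a + 1" using lf(3,4) aX a_def \<beta>_def Y_def Z_def by auto
      have am: "a \<le> m" unfolding a_def m_def using f Z_def by (simp add: stab_le_card)
      have mA: "m \<le> 2*a" using IHZ m_def a_def by simp
      have FX: "fib_index X E = fib_index Y E + fib_index Z E" using lf(1) Y_def Z_def by simp
      have FZ: "fib_index Z E \<le> hh m a" using IHZ m_def a_def by simp
      have FY: "fib_index Y E \<le> hh (m+1) \<beta>" using IHY cY \<beta>_def by simp
      have main: "fib_index X E \<le> hh (m+2) (a+1) \<and>
         (fib_index X E = hh (m+2) (a+1) \<longrightarrow> \<beta> = a + 1 \<and> fib_index Y E = hh (m+1) \<beta> \<and> fib_index Z E = hh m a)"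
      proof (cases "\<beta> = a + 1")
        case True
        have "hh (m+1) \<beta> = 2 * hh m a" using N1[OF mA] True by simp
        moreover have "hh (m+2) (a+1) = 3 * hh m a" using N2[OF mA am] .
        ultimately show ?thesis using FX FZ FY True by simp
      next
        case False
        hence b: "\<beta> = a" using bnd by simp
        have "m + 1 \<le> 2*a" using IHY cY \<beta>_def b by simp
        hence "hh (m+1) a + hh m a < hh (m+2) (a+1)" using N4 am by blast
        thus ?thesis using FX FZ FY b by simp
      qed
      have mX: "matching E X" if eq: "fib_index X E = hh (m+2) (a+1)"
      proof -
        have b: "\<beta> = a + 1" and mY: "matching E Y" and mZ: "matching E Z"
          using main eq IHY IHZ cY \<beta>_def m_def a_def by auto
        have nw: "nbrs E X w \<subseteq> {u}"
        proof
          fix t assume t: "t \<in> nbrs E X w"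
          show "t \<in> {u}"
          proof (rule ccontr)
            assume tu: "t \<notin> {u}"
            have tY: "t \<in> Y" using t tu nbrs_sub Y_def by fastforce
            have wY: "w \<in> Y" using wX uw Y_def by simp
            have tw: "t \<in> nbrs E Y w" using t tY unfolding nbrs_def by simp
            have nYw: "nbrs E Y w = {t}" using matchingD[OF mY wY tw] .
            have nYt: "nbrs E Y t = {w}" using matchingD[OF mY tY nbrs_sym[OF tw wY]] .
            have tZ: "t \<in> Z" using tY tw nYw Z_def Y_def uw nl
              unfolding nbrs_def NL_def by auto
            have nZt: "nbrs E Z t = {}" using nYt unfolding Z_def Y_def nbrs_Diff by auto
            have fZ: "finite Z" using f Z_def by simp
            have isoZ: "stab_num Z E = Suc (stab_num (Z - {t}) E)" using iso_fact[OF fZ nl tZ nZt] by simp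
            have fY: "finite Y" using f Y_def by simp
            have e1: "Y - {w} = Z" unfolding Y_def Z_def by auto
            have e2: "Y - insert w (nbrs E Y w) = Z - {t}"
            proof -
              have "Y - insert w (nbrs E Y w) = Y - {w,t}" using nYw by simp
              also have "\<dots> = Z - {t}" unfolding Y_def Z_def by auto
              finally show ?thesis .
            qed
            have "stab_num Y E = max (stab_num Z E) (1 + stab_num (Z - {t}) E)"
              using L2[OF fY nl wY] e1 e2 by simp
            hence "\<beta> = a" using isoZ \<beta>_def a_def by simp
            thus False using b by simp
          qed
        qed
        show ?thesis
        proof (rule matchingI)
          fix s assume s: "s \<in> X"
          show "\<exists>c. nbrs E X s \<subseteq> {c}"
          proof (cases "s = u")
            case True thus ?thesis using nu by auto
          next
            case su: False
            show ?thesis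
            proof (cases "s = w")
              case True thus ?thesis using nw by auto
            next
              case False
              have "u \<notin> nbrs E X s" using nbrs_sym[of u E X s] nu s False by auto
              hence "nbrs E X s = nbrs E Y s" unfolding Y_def nbrs_Diff by auto
              moreover have "s \<in> Y" using s su Y_def by simp
              ultimately show ?thesis using mY unfolding matching_def by blast
            qed
          qed
        qed
      qed
      have "card X \<le> 2 * stab_num X E" using cX aX mA by simp
      thus ?thesis using main mX cX aX by simp
    qed
  qed
qed

definition RR :: "'a set set \<Rightarrow> 'a set \<Rightarrow> 'a \<Rightarrow> 'a \<Rightarrow> bool" where
  "RR E X a b \<longleftrightarrow> a \<in> X \<and> b \<in> X \<and> {a,b} \<in> E"

definition conn :: "'a set set \<Rightarrow> 'a set \<Rightarrow> bool" where
  "conn E X \<longleftrightarrow> (\<forall>a\<in>X. \<forall>b\<in>X. (RR E X)\<^sup>*\<^sup>* a b)"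

lemma RR_sym: "RR E X a b \<Longrightarrow> RR E X b a" unfolding RR_def by (simp add: dsym)

lemma RR_rsym: "(RR E X)\<^sup>*\<^sup>* a b \<Longrightarrow> (RR E X)\<^sup>*\<^sup>* b a"
proof (induction rule: rtranclp_induct)
  case base thus ?case by simp
next
  case (step y z)
  thus ?case using RR_sym[OF step(2)] by (meson converse_rtranclp_into_rtranclp)
qed

lemma conn_del_leaf:
  assumes c: "conn E X" and u: "u \<in> X" and n: "nbrs E X u = {w}"
  shows "conn E (X - {u})"
proof -
  have wX: "w \<in> X" using n nbrs_sub by fastforce
  have claim: "y = u \<or> (RR E (X - {u}))\<^sup>*\<^sup>* w y" if "(RR E X)\<^sup>*\<^sup>* w y" for y
    using that
  proof (induction rule: rtranclp_induct)
    case base thus ?case by simp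
  next
    case (step y t)
    show ?case
    proof (cases "t = u")
      case True thus ?thesis by simp
    next
      case tu: False
      show ?thesis
      proof (cases "y = u")
        case True
        hence "t \<in> nbrs E X u" using step(2) unfolding RR_def nbrs_def by simp
        hence "t = w" using n by simp
        thus ?thesis by simp
      next
        case False
        hence "(RR E (X - {u}))\<^sup>*\<^sup>* w y" using step(3) by simp
        moreover have "RR E (X - {u}) y t" using step(2) False tu unfolding RR_def by simp
        ultimately show ?thesis by (meson rtranclp.rtrancl_into_rtrancl)
      qed
    qed
  qed
  show ?thesis unfolding conn_def
  proof (intro ballI)
    fix a b assume a: "a \<in> X - {u}" and b: "b \<in> X - {u}"
    have "(RR E (X - {u}))\<^sup>*\<^sup>* w a" using claim c wX a unfolding conn_def by blast
    moreover have "(RR E (X - {u}))\<^sup>*\<^sup>* w b" using claim c wX b unfolding conn_def by blast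
    ultimately show "(RR E (X - {u}))\<^sup>*\<^sup>* a b" using RR_rsym by (metis rtranclp_trans)
  qed
qed

lemma conn_two:
  assumes c: "conn E X" and u: "u \<in> X" and nu: "nbrs E X u = {w}" and nw: "nbrs E X w = {u}"
  shows "X = {u,w}"
proof -
  have wX: "w \<in> X" using nu nbrs_sub by fastforce
  have claim: "y \<in> {u,w}" if "(RR E X)\<^sup>*\<^sup>* u y" for y
    using that
  proof (induction rule: rtranclp_induct)
    case base thus ?case by simp
  next
    case (step y t)
    hence "t \<in> nbrs E X y" unfolding RR_def nbrs_def by simp
    thus ?case using step(3) nu nw by auto
  qed
  show ?thesis using claim c u wX unfolding conn_def by blast
qed

lemma closure_H2:
  assumes c: "conn E X" and v: "v \<in> X" and m: "matching E (X - {v})" and nl: "NL E"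
  shows "\<forall>y\<in>X - {v}. {v,y} \<in> E \<or> (\<exists>z\<in>X - {v}. {v,z} \<in> E \<and> {z,y} \<in> E)"
proof -
  have claim: "y = v \<or> {v,y} \<in> E \<or> (\<exists>z\<in>X - {v}. {v,z} \<in> E \<and> {z,y} \<in> E)"
    if "(RR E X)\<^sup>*\<^sup>* v y" for y
    using that
  proof (induction rule: rtranclp_induct)
    case base thus ?case by simp
  next
    case (step y t)
    have yX: "y \<in> X" and tX: "t \<in> X" and yt: "{y,t} \<in> E" using step(2) unfolding RR_def by auto
    show ?case
    proof (cases "t = v \<or> y = v")
      case True thus ?thesis using yt by auto
    next
      case False
      hence tv: "t \<noteq> v" and yv: "y \<noteq> v" by auto
      from step(3) show ?thesis
      proof (elim disjE)
        assume "y = v" thus ?thesis using yv by simp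
      next
        assume "{v,y} \<in> E"
        thus ?thesis using yt yX yv by auto
      next
        assume "\<exists>z\<in>X - {v}. {v,z} \<in> E \<and> {z,y} \<in> E"
        then obtain z where z: "z \<in> X - {v}" "{v,z} \<in> E" "{z,y} \<in> E" by blast
        have "t \<in> nbrs E (X - {v}) y" using tX tv yt unfolding nbrs_def by simp
        moreover have "z \<in> nbrs E (X - {v}) y" using z(1,3) unfolding nbrs_def by (simp add: dsym)
        moreover have "y \<in> X - {v}" using yX yv by simp
        ultimately have "t = z" using m unfolding matching_def by blast
        thus ?thesis using z by simp
      qed
    qed
  qed
  show ?thesis using claim c v unfolding conn_def by blast
qed

lemma acyc_H3:
  assumes ac: "\<not> has_cycle X E" and nl: "NL E" and v: "v \<in> X"
  shows "\<forall>y\<in>X - {v}. \<forall>z\<in>X - {v}. {v,y} \<in> E \<longrightarrow> {v,z} \<in> E \<longrightarrow> {y,z} \<notin> E"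
proof (intro ballI impI)
  fix y z assume y: "y \<in> X - {v}" and z: "z \<in> X - {v}" and vy: "{v,y} \<in> E" and vz: "{v,z} \<in> E"
  show "{y,z} \<notin> E"
  proof
    assume yz: "{y,z} \<in> E"
    have "y \<noteq> z" using yz nl by (auto simp: NL_def)
    hence "has_cycle X E" unfolding has_cycle_def
      using y z v vy vz yz
      by (intro exI[of _ "[v,y,z]"]) (auto simp: less_Suc_eq nth_Cons' dsym)
    thus False using ac by simp
  qed
qed

definition spid :: "'a set set \<Rightarrow> 'a set \<Rightarrow> 'a \<Rightarrow> bool" where
  "spid E X v \<longleftrightarrow> finite X \<and> NL E \<and> v \<in> X \<and> matching E (X - {v}) \<and>
    (\<forall>y\<in>X - {v}. {v,y} \<in> E \<or> (\<exists>z\<in>X - {v}. {v,z} \<in> E \<and> {z,y} \<in> E)) \<and>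
    (\<forall>y\<in>X - {v}. \<forall>z\<in>X - {v}. {v,y} \<in> E \<longrightarrow> {v,z} \<in> E \<longrightarrow> {y,z} \<notin> E)"

definition Sh :: "'a set set \<Rightarrow> 'a set \<Rightarrow> 'a \<Rightarrow> 'a set" where
  "Sh E X v = {y \<in> X - {v}. nbrs E (X - {v}) y = {}}"
definition Fa :: "'a set set \<Rightarrow> 'a set \<Rightarrow> 'a \<Rightarrow> 'a set" where
  "Fa E X v = {y \<in> X - {v}. {v,y} \<notin> E}"
definition Ne :: "'a set set \<Rightarrow> 'a set \<Rightarrow> 'a \<Rightarrow> 'a set" where
  "Ne E X v = {y \<in> X - {v}. {v,y} \<in> E \<and> nbrs E (X - {v}) y \<noteq> {}}"
definition pt :: "'a set set \<Rightarrow> 'a set \<Rightarrow> 'a \<Rightarrow> 'a \<Rightarrow> 'a" where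
  "pt E X v y = the_elem (nbrs E (X - {v}) y)"

context
  fixes E :: "'a set set" and X :: "'a set" and v :: 'a
  assumes sp: "spid E X v"
begin

lemma sp_f: "finite X" using sp by (simp add: spid_def)
lemma sp_nl: "NL E" using sp by (simp add: spid_def)
lemma sp_v: "v \<in> X" using sp by (simp add: spid_def)
lemma sp_m: "matching E (X - {v})" using sp by (simp add: spid_def)
lemma sp_H2: "y \<in> X - {v} \<Longrightarrow> {v,y} \<in> E \<or> (\<exists>z\<in>X - {v}. {v,z} \<in> E \<and> {z,y} \<in> E)"
  using sp by (simp add: spid_def)
lemma sp_H3: "y \<in> X - {v} \<Longrightarrow> z \<in> X - {v} \<Longrightarrow> {v,y} \<in> E \<Longrightarrow> {v,z} \<in> E \<Longrightarrow> {y,z} \<notin> E"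
  using sp unfolding spid_def by blast

lemma Sh_adj: "y \<in> Sh E X v \<Longrightarrow> {v,y} \<in> E"
proof -
  assume y: "y \<in> Sh E X v"
  hence yX: "y \<in> X - {v}" and n: "nbrs E (X - {v}) y = {}" by (auto simp: Sh_def)
  show ?thesis
  proof (rule ccontr)
    assume "{v,y} \<notin> E"
    then obtain z where "z \<in> X - {v}" "{z,y} \<in> E" using sp_H2[OF yX] by blast
    hence "z \<in> nbrs E (X - {v}) y" unfolding nbrs_def by (simp add: dsym)
    thus False using n by simp
  qed
qed

lemma Fa_partner: "y \<in> Fa E X v \<Longrightarrow> \<exists>z. nbrs E (X - {v}) y = {z} \<and> z \<in> Ne E X v"
proof -
  assume y: "y \<in> Fa E X v"
  hence yX: "y \<in> X - {v}" and n: "{v,y} \<notin> E" by (auto simp: Fa_def)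
  then obtain z where z: "z \<in> X - {v}" "{v,z} \<in> E" "{z,y} \<in> E" using sp_H2[OF yX] by blast
  hence zn: "z \<in> nbrs E (X - {v}) y" unfolding nbrs_def by (simp add: dsym)
  have "nbrs E (X - {v}) y = {z}" using matchingD[OF sp_m yX zn] .
  moreover have "y \<in> nbrs E (X - {v}) z" using nbrs_sym[OF zn yX] .
  hence "z \<in> Ne E X v" using z unfolding Ne_def by auto
  ultimately show ?thesis by blast
qed

lemma Ne_partner: "y \<in> Ne E X v \<Longrightarrow> nbrs E (X - {v}) y = {pt E X v y} \<and> pt E X v y \<in> Fa E X v"
proof -
  assume y: "y \<in> Ne E X v"
  hence yX: "y \<in> X - {v}" and vy: "{v,y} \<in> E" and ne: "nbrs E (X - {v}) y \<noteq> {}" by (auto simp: Ne_def)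
  then obtain z where zn: "z \<in> nbrs E (X - {v}) y" by auto
  have nz: "nbrs E (X - {v}) y = {z}" using matchingD[OF sp_m yX zn] .
  hence p: "pt E X v y = z" unfolding pt_def by simp
  have zX: "z \<in> X - {v}" and yz: "{y,z} \<in> E" using zn unfolding nbrs_def by auto
  have "{v,z} \<notin> E" using sp_H3[OF yX zX vy] yz by blast
  hence "z \<in> Fa E X v" using zX unfolding Fa_def by simp
  thus ?thesis using nz p by simp
qed

lemma pt_inj: "inj_on (pt E X v) (Ne E X v)"
proof (rule inj_onI)
  fix a b assume a: "a \<in> Ne E X v" and b: "b \<in> Ne E X v" and e: "pt E X v a = pt E X v b"
  have aX: "a \<in> X - {v}" and bX: "b \<in> X - {v}" using a b by (auto simp: Ne_def)
  define z where "z = pt E X v a"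
  have za: "z \<in> nbrs E (X - {v}) a" using Ne_partner[OF a] z_def by simp
  have zb: "z \<in> nbrs E (X - {v}) b" using Ne_partner[OF b] z_def e by simp
  have zX: "z \<in> X - {v}" using za nbrs_sub by fastforce
  have "a \<in> nbrs E (X - {v}) z" "b \<in> nbrs E (X - {v}) z"
    using nbrs_sym[OF za aX] nbrs_sym[OF zb bX] by auto
  thus "a = b" using sp_m zX unfolding matching_def by blast
qed

lemma pt_img: "pt E X v ` Ne E X v = Fa E X v"
proof
  show "pt E X v ` Ne E X v \<subseteq> Fa E X v" using Ne_partner by blast
  show "Fa E X v \<subseteq> pt E X v ` Ne E X v"
  proof
    fix y assume y: "y \<in> Fa E X v"
    then obtain z where z: "nbrs E (X - {v}) y = {z}" "z \<in> Ne E X v" using Fa_partner by blast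
    have yX: "y \<in> X - {v}" using y by (auto simp: Fa_def)
    have "y \<in> nbrs E (X - {v}) z" using nbrs_sym[of z E "X - {v}" y] z yX by auto
    hence "pt E X v z = y" using Ne_partner[OF z(2)] by simp
    thus "y \<in> pt E X v ` Ne E X v" using z(2) by blast
  qed
qed

lemma pt_bij: "bij_betw (pt E X v) (Ne E X v) (Fa E X v)"
  using pt_inj pt_img by (simp add: bij_betw_def)

lemma parts: "X - {v} = Sh E X v \<union> Ne E X v \<union> Fa E X v"
  using Sh_adj unfolding Sh_def Ne_def Fa_def by blast

lemma parts_disj: "Sh E X v \<inter> Ne E X v = {}" "Sh E X v \<inter> Fa E X v = {}" "Ne E X v \<inter> Fa E X v = {}"
  using Sh_adj unfolding Sh_def Ne_def Fa_def by auto

lemma fins: "finite (Sh E X v)" "finite (Ne E X v)" "finite (Fa E X v)"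
  using sp_f unfolding Sh_def Ne_def Fa_def by auto

lemma card_Ne: "card (Ne E X v) = card (Fa E X v)"
  using pt_bij bij_betw_same_card by blast

lemma card_rest: "card (X - {v}) = card (Sh E X v) + 2 * card (Fa E X v)"
proof -
  have "card (X - {v}) = card (Sh E X v \<union> Ne E X v \<union> Fa E X v)" using parts by simp
  also have "\<dots> = card (Sh E X v \<union> Ne E X v) + card (Fa E X v)"
    using fins parts_disj by (intro card_Un_disjoint) auto
  also have "card (Sh E X v \<union> Ne E X v) = card (Sh E X v) + card (Ne E X v)"
    using fins parts_disj by (intro card_Un_disjoint) auto
  finally show ?thesis using card_Ne by simp
qed

lemma Fa_edgeless: "a \<in> Fa E X v \<Longrightarrow> b \<in> Fa E X v \<Longrightarrow> {a,b} \<notin> E"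
proof
  assume a: "a \<in> Fa E X v" and b: "b \<in> Fa E X v" and e: "{a,b} \<in> E"
  obtain z where z: "nbrs E (X - {v}) a = {z}" "z \<in> Ne E X v" using Fa_partner[OF a] by blast
  have "b \<in> nbrs E (X - {v}) a" using b e unfolding Fa_def nbrs_def by simp
  hence "b = z" using z by simp
  thus False using z(2) b parts_disj(3) by blast
qed

lemma ShFa_stable: "stable_set (X - {v}) E (Sh E X v \<union> Fa E X v)"
  unfolding stable_set_def
proof (intro conjI ballI)
  show "Sh E X v \<union> Fa E X v \<subseteq> X - {v}" unfolding Sh_def Fa_def by auto
  fix a b assume a: "a \<in> Sh E X v \<union> Fa E X v" and b: "b \<in> Sh E X v \<union> Fa E X v"
  show "{a,b} \<notin> E"
  proof
    assume e: "{a,b} \<in> E"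
    have aX: "a \<in> X - {v}" and bX: "b \<in> X - {v}" using a b unfolding Sh_def Fa_def by auto
    have ba: "b \<in> nbrs E (X - {v}) a" using e bX unfolding nbrs_def by simp
    have ab: "a \<in> nbrs E (X - {v}) b" using nbrs_sym[OF ba aX] .
    show False
    proof (cases "a \<in> Sh E X v \<or> b \<in> Sh E X v")
      case True thus False using ba ab unfolding Sh_def by auto
    next
      case False
      hence "a \<in> Fa E X v" "b \<in> Fa E X v" using a b by auto
      thus False using Fa_edgeless e by blast
    qed
  qed
qed

lemma stab_rest: "stab_num (X - {v}) E = card (Sh E X v) + card (Fa E X v)"
proof -
  have fr: "finite (X - {v})" using sp_f by simp
  have "card (Sh E X v \<union> Fa E X v) = card (Sh E X v) + card (Fa E X v)"
    using fins parts_disj by (intro card_Un_disjoint) auto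
  hence ge: "card (Sh E X v) + card (Fa E X v) \<le> stab_num (X - {v}) E"
    using stab_ge[OF fr ShFa_stable] by simp
  obtain S where S: "stable_set (X - {v}) E S" "card S = stab_num (X - {v}) E" using stab_ex[OF fr] by blast
  define \<phi> where "\<phi> y = (if y \<in> Ne E X v then pt E X v y else y)" for y
  have SX: "S \<subseteq> X - {v}" using S(1) by (simp add: stable_set_def)
  have inj: "inj_on \<phi> S"
  proof (rule inj_onI)
    fix a b assume a: "a \<in> S" and b: "b \<in> S" and e: "\<phi> a = \<phi> b"
    show "a = b"
    proof (cases "a \<in> Ne E X v")
      case aN: True
      show ?thesis
      proof (cases "b \<in> Ne E X v")
        case True thus ?thesis using aN e pt_inj \<phi>_def by (simp add: inj_on_def)
      next
        case False
        hence "pt E X v a = b" using aN e \<phi>_def by simp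
        hence "b \<in> nbrs E (X - {v}) a" using Ne_partner[OF aN] by simp
        hence "{a,b} \<in> E" unfolding nbrs_def by simp
        thus ?thesis using S(1) a b unfolding stable_set_def by blast
      qed
    next
      case aN: False
      show ?thesis
      proof (cases "b \<in> Ne E X v")
        case bN: True
        hence "pt E X v b = a" using aN e \<phi>_def by simp
        hence "a \<in> nbrs E (X - {v}) b" using Ne_partner[OF bN] by simp
        hence "{b,a} \<in> E" unfolding nbrs_def by simp
        thus ?thesis using S(1) a b unfolding stable_set_def by blast
      next
        case False thus ?thesis using aN e \<phi>_def by simp
      qed
    qed
  qed
  have img: "\<phi> ` S \<subseteq> Sh E X v \<union> Fa E X v"
  proof
    fix t assume "t \<in> \<phi> ` S"
    then obtain y where y: "y \<in> S" "t = \<phi> y" by blast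
    show "t \<in> Sh E X v \<union> Fa E X v"
    proof (cases "y \<in> Ne E X v")
      case True thus ?thesis using y Ne_partner \<phi>_def by simp
    next
      case False
      hence "y \<in> Sh E X v \<union> Fa E X v" using parts SX y(1) by blast
      thus ?thesis using y False \<phi>_def by simp
    qed
  qed
  have "card S = card (\<phi> ` S)" using card_image[OF inj] by simp
  also have "\<dots> \<le> card (Sh E X v \<union> Fa E X v)" using img fins by (intro card_mono) auto
  finally have "stab_num (X - {v}) E \<le> card (Sh E X v) + card (Fa E X v)"
    using S(2) \<open>card (Sh E X v \<union> Fa E X v) = _\<close> by simp
  thus ?thesis using ge by simp
qed

lemma Fa_eq: "X - insert v (nbrs E X v) = Fa E X v"
  unfolding Fa_def nbrs_def by auto

lemma fib_Fa: "fib_index (Fa E X v) E = 2 ^ card (Fa E X v)"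
proof -
  have "{S. stable_set (Fa E X v) E S} = Pow (Fa E X v)"
    using Fa_edgeless unfolding stable_set_def by blast
  thus ?thesis using fins(3) by (simp add: fib_index_def card_Pow)
qed

lemma stab_Fa: "stab_num (Fa E X v) E = card (Fa E X v)"
proof -
  have "stable_set (Fa E X v) E (Fa E X v)" using Fa_edgeless unfolding stable_set_def by blast
  thus ?thesis using stab_ge[OF fins(3)] stab_le_card[OF fins(3)] by (metis le_antisym)
qed

lemma spid_fib: "fib_index X E = fib_index (X - {v}) E + 2 ^ card (Fa E X v)"
  using L1[OF sp_f sp_nl sp_v] Fa_eq fib_Fa by simp

lemma spid_stab: "stab_num X E = max (card (Sh E X v) + card (Fa E X v)) (1 + card (Fa E X v))"
  using L2[OF sp_f sp_nl sp_v] Fa_eq stab_Fa stab_rest by simp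

lemma spid_card: "card X = 1 + card (Sh E X v) + 2 * card (Fa E X v)"
  using card_rest card_Suc_Diff1[OF sp_f sp_v] by simp

lemma spid_F: "Sh E X v \<noteq> {} \<Longrightarrow> fib_index X E = gg (card X) (stab_num X E) \<and>
   stab_num X E = card (Sh E X v) + card (Fa E X v)"
proof -
  assume ne: "Sh E X v \<noteq> {}"
  have s1: "1 \<le> card (Sh E X v)" using ne fins(1) by (simp add: Suc_le_eq card_gt_0_iff)
  have st: "stab_num X E = card (Sh E X v) + card (Fa E X v)" using spid_stab s1 by simp
  have "fib_index (X - {v}) E = hh (card (X - {v})) (stab_num (X - {v}) E)"
    using MLm[OF _ sp_nl sp_m] sp_f by simp
  hence "fib_index X E = hh (card (Sh E X v) + 2 * card (Fa E X v)) (card (Sh E X v) + card (Fa E X v))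
      + 2 ^ card (Fa E X v)" using spid_fib card_rest stab_rest by simp
  thus ?thesis using spider_num[OF s1] st spid_card by simp
qed

end

definition spiderP :: "'a set set \<Rightarrow> 'a set \<Rightarrow> 'a \<Rightarrow> bool" where
  "spiderP E X v \<longleftrightarrow> v \<in> X \<and> matching E (X - {v}) \<and> (\<exists>y\<in>X - {v}. nbrs E (X - {v}) y = {})"

lemma tree_spid:
  assumes "finite X" "NL E" "conn E X" "\<not> has_cycle X E" "v \<in> X" "matching E (X - {v})"
  shows "spid E X v"
proof -
  have "\<forall>y\<in>X - {v}. {v,y} \<in> E \<or> (\<exists>z\<in>X - {v}. {v,z} \<in> E \<and> {z,y} \<in> E)"
    using closure_H2[OF assms(3,5,6,2)] .
  moreover have "\<forall>y\<in>X - {v}. \<forall>z\<in>X - {v}. {v,y} \<in> E \<longrightarrow> {v,z} \<in> E \<longrightarrow> {y,z} \<notin> E"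
    using acyc_H3[OF assms(4,2,5)] .
  ultimately show ?thesis using assms unfolding spid_def by simp
qed

lemma tree_spider_F:
  assumes "finite X" "NL E" "conn E X" "\<not> has_cycle X E" "spiderP E X v"
  shows "fib_index X E = gg (card X) (stab_num X E)"
proof -
  have v: "v \<in> X" and m: "matching E (X - {v})" and i: "\<exists>y\<in>X - {v}. nbrs E (X - {v}) y = {}"
    using assms(5) unfolding spiderP_def by auto
  have sp: "spid E X v" using tree_spid[OF assms(1-4) v m] .
  have "Sh E X v \<noteq> {}" using i unfolding Sh_def by blast
  from spid_F[OF sp this] show ?thesis by simp
qed

lemma conn_edge:
  assumes c: "conn E X" and f: "finite X" and two: "2 \<le> card X"
  shows "\<exists>a\<in>X. \<exists>b\<in>X. {a,b} \<in> E"
proof -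
  obtain a b where ab: "a \<in> X" "b \<in> X" "a \<noteq> b"
  proof -
    have "\<exists>a\<in>X. \<exists>b\<in>X. a \<noteq> b"
    proof (rule ccontr)
      assume "\<not> ?thesis"
      hence "\<forall>a\<in>X. \<forall>b\<in>X. a = b" by blast
      hence "card X \<le> Suc 0" using card_le_Suc0_iff_eq[OF f] by simp
      thus False using two by simp
    qed
    thus ?thesis using that by blast
  qed
  have "(RR E X)\<^sup>*\<^sup>* a b" using c ab unfolding conn_def by blast
  hence "\<exists>c. RR E X a c" using ab(3) by (cases rule: converse_rtranclpE) auto
  thus ?thesis unfolding RR_def by blast
qed

lemma TL:
  assumes "finite X" "NL E" "conn E X" "\<not> has_cycle X E" "2 \<le> card X"
  shows "fib_index X E \<le> gg (card X) (stab_num X E) \<and> stab_num X E + 1 \<le> card X \<and>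
    (fib_index X E = gg (card X) (stab_num X E) \<longrightarrow> (\<exists>v. spiderP E X v))"
  using assms
proof (induction "card X" arbitrary: X rule: less_induct)
  case less
  note f = less(2) and nl = less(3) and c = less(4) and ac = less(5) and two = less(6)
  have acs: "\<And>Y. Y \<subseteq> X \<Longrightarrow> \<not> has_cycle Y E" using ac has_cycle_mono by metis
  obtain a b where ab: "a \<in> X" "b \<in> X" "{a,b} \<in> E" using conn_edge[OF c f two] by blast
  obtain u w x where u: "u \<in> X" and nu: "nbrs E X u = {w}"
     and nw0: "\<forall>t \<in> nbrs E X w - {x}. nbrs E X t = {w}"
    using PL[OF f nl ac ab] by blast
  note lf = leaf_fact[OF f nl u nu]
  have wX: "w \<in> X" using nu nbrs_sub by fastforce
  have uw: "u \<noteq> w" using nu nl unfolding nbrs_def NL_def by auto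
  have uinw: "u \<in> nbrs E X w" using nbrs_sym[of w E X u] nu u by simp
  have cX2: "card X = card (X - {u,w}) + 2" using card_minus2[OF f u wX uw] .
  have aZle: "stab_num (X - {u,w}) E \<le> card (X - {u,w})" using f by (simp add: stab_le_card)
  have abnd: "stab_num X E + 1 \<le> card X" using lf(2) cX2 aZle by simp
  show ?case
  proof (cases "\<exists>u'. u' \<in> nbrs E X w \<and> u' \<noteq> u \<and> nbrs E X u' = {w}")
    case True
    then obtain u' where u': "u' \<in> nbrs E X w" "u' \<noteq> u" "nbrs E X u' = {w}" by blast
    define Y where "Y = X - {u}"
    define Z where "Z = X - {u,w}"
    have u'X: "u' \<in> X" using u' nbrs_sub by fastforce
    have u'w: "u' \<noteq> w" using u'(3) nl unfolding nbrs_def NL_def by auto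
    have u'Y: "u' \<in> Y" using u'X u'(2) Y_def by simp
    have nYu': "nbrs E Y u' = {w}" using u'(3) uw unfolding Y_def nbrs_Diff by auto
    have fY: "finite Y" using f Y_def by simp
    have fZ: "finite Z" using f Z_def by simp
    note lfY = leaf_fact[OF fY nl u'Y nYu']
    have u'Z: "u' \<in> Z" using u'X u'(2) u'w Z_def by simp
    have nZu': "nbrs E Z u' = {}" using u'(3) unfolding Z_def nbrs_Diff by auto
    note isoZ = iso_fact[OF fZ nl u'Z nZu']
    have eYZ: "Y - {u',w} = Z - {u'}" unfolding Y_def Z_def by auto
    have aY1: "stab_num Y E = Suc (stab_num (Z - {u'}) E)" using lfY(2) unfolding eYZ .
    have aY2: "stab_num Z E = Suc (stab_num (Z - {u'}) E)" using isoZ by blast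
    have aY3: "stab_num X E = Suc (stab_num Z E)" using lf(2) unfolding Z_def .
    have aY: "stab_num Y E + 1 = stab_num X E" using aY1 aY2 aY3 by simp
    have cY: "card Y + 1 = card X" using card_Suc_Diff1[OF f u] Y_def by simp
    have c3: "3 \<le> card X"
    proof -
      have "{u,u',w} \<subseteq> X" using u u'X wX by auto
      moreover have "card {u,u',w} = 3" using u'(2) u'w uw by auto
      ultimately have "3 \<le> card X" using card_mono[OF f, of "{u,u',w}"] by linarith
      thus ?thesis .
    qed
    have ltY: "card Y < card X" using cY by simp
    have acY: "\<not> has_cycle Y E" using acs[of Y] Y_def by blast
    have acZ: "\<not> has_cycle Z E" using acs[of Z] Z_def by blast
    have cY2: "2 \<le> card Y" using cY c3 by simp
    have cYc: "conn E Y" using conn_del_leaf[OF c u nu] Y_def by simp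
    have IHY: "fib_index Y E \<le> gg (card Y) (stab_num Y E) \<and> stab_num Y E + 1 \<le> card Y"
      using less(1)[OF ltY fY nl cYc acY cY2] by blast
    have FLY: "card Y \<le> 2 * stab_num Y E" using FL[OF fY nl acY] by blast
    have FLZ: "card Z \<le> 2 * stab_num Z E \<and> fib_index Z E \<le> hh (card Z) (stab_num Z E) \<and>
      (fib_index Z E = hh (card Z) (stab_num Z E) \<longrightarrow> matching E Z)"
      using FL[OF fZ nl acZ] .
    define m where "m = card Z"
    define a' where "a' = stab_num Z E"
    have cXm: "card X = m + 2" using cX2 m_def Z_def by simp
    have aXa: "stab_num X E = a' + 1" using lf(2) a'_def Z_def by simp
    have cYm: "card Y = m + 1" using cY cXm by simp
    have aYa: "stab_num Y E = a'" using aY aXa by simp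
    have h1: "m + 1 \<le> 2 * a'" using FLY cYm aYa by simp
    have h2: "a' \<le> m" using IHY cYm aYa by simp
    have num: "gg (m+1) a' + hh m a' = gg (m+2) (a'+1)" using caseA_num[OF h1 h2] .
    have FX: "fib_index X E = fib_index Y E + fib_index Z E" using lf(1) Y_def Z_def by simp
    have le: "fib_index X E \<le> gg (card X) (stab_num X E)"
      using FX IHY FLZ num cXm aXa cYm aYa m_def a'_def by simp
    have sp: "\<exists>v. spiderP E X v" if eq: "fib_index X E = gg (card X) (stab_num X E)"
    proof -
      have "fib_index Z E = hh m a'" using eq FX IHY FLZ num cXm aXa cYm aYa m_def a'_def by simp
      hence mZ: "matching E Z" using FLZ m_def a'_def by simp
      have mXw: "matching E (X - {w})"
      proof (rule matchingI)
        fix s assume s: "s \<in> X - {w}"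
        show "\<exists>c. nbrs E (X - {w}) s \<subseteq> {c}"
        proof (cases "s = u")
          case True thus ?thesis using nu by (auto simp: nbrs_Diff)
        next
          case False
          have "u \<notin> nbrs E X s" using nbrs_sym[of u E X s] nu s by auto
          hence "nbrs E (X - {w}) s = nbrs E Z s" unfolding Z_def nbrs_Diff by auto
          moreover have "s \<in> Z" using s False Z_def by simp
          ultimately show ?thesis using mZ unfolding matching_def by blast
        qed
      qed
      have "u \<in> X - {w}" "nbrs E (X - {w}) u = {}" using u uw nu by (auto simp: nbrs_Diff)
      thus ?thesis using mXw wX unfolding spiderP_def by auto
    qed
    show ?thesis using le sp abnd by simp
  next
    case False
    have nwsub: "nbrs E X w \<subseteq> {u, x}"
    proof
      fix t assume t: "t \<in> nbrs E X w"
      show "t \<in> {u,x}"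
      proof (rule ccontr)
        assume tux: "t \<notin> {u,x}"
        hence "t \<in> nbrs E X w - {x}" using t by simp
        hence "nbrs E X t = {w}" using nw0 by blast
        hence "\<exists>u'. u' \<in> nbrs E X w \<and> u' \<noteq> u \<and> nbrs E X u' = {w}" using t tux by blast
        thus False using False by blast
      qed
    qed
    show ?thesis
    proof (cases "nbrs E X w = {u}")
      case True
      have X2: "X = {u,w}" using conn_two[OF c u nu True] .
      have Xw: "X - {w} = {u}" using X2 uw by auto
      have nbu: "nbrs E (X - {w}) u = {}" using nu by (auto simp: nbrs_Diff)
      have "matching E (X - {w})"
      proof (rule matchingI)
        fix s assume "s \<in> X - {w}"
        hence "s = u" using Xw by simp
        thus "\<exists>c. nbrs E (X - {w}) s \<subseteq> {c}" using nbu by simp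
      qed
      hence spd: "spiderP E X w" unfolding spiderP_def using wX Xw nbu by simp
      have "fib_index X E = gg (card X) (stab_num X E)" using tree_spider_F[OF f nl c ac spd] .
      thus ?thesis using abnd spd by (simp add: exI[of _ w])
    next
      case False
      hence nw: "nbrs E X w = {u,x}" and xu: "x \<noteq> u" using nwsub uinw by auto
      have xX: "x \<in> X" using nw nbrs_sub by fastforce
      have "x \<in> nbrs E X w" using nw by simp
      hence xw: "x \<noteq> w" using NL_ne[OF nl] unfolding nbrs_def by auto
      define Y where "Y = X - {u}"
      define T where "T = X - {u,w}"
      have fY: "finite Y" using f Y_def by simp
      have fT: "finite T" using f T_def by simp
      have wY: "w \<in> Y" using wX uw Y_def by simp
      have nYw: "nbrs E Y w = {x}" using nw xu unfolding Y_def nbrs_Diff by auto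
      note lfY = leaf_fact[OF fY nl wY nYw]
      have xT: "x \<in> T" using xX xu xw T_def by simp
      have eYT: "Y - {w} = T" "Y - {w,x} = T - {x}" unfolding Y_def T_def by auto
      have FX: "fib_index X E = 2 * fib_index T E + fib_index (T - {x}) E"
        using lf(1) lfY(1) eYT Y_def T_def by simp
      have aX: "stab_num X E = stab_num T E + 1" using lf(2) T_def by simp
      have cXT: "card X = card T + 2" using cX2 T_def by simp
      show ?thesis
      proof (cases "card T = 1")
        case True
        have T1: "T = {x}" using True xT by (metis card_1_singletonE singletonD)
        have X3: "X = {u,w,x}" using T1 u wX unfolding T_def by auto
        have nXu: "nbrs E (X - {w}) u = {}" using nu by (auto simp: nbrs_Diff)
        have nXx: "nbrs E (X - {w}) x \<subseteq> {}"
        proof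
          fix t assume t: "t \<in> nbrs E (X - {w}) x"
          hence "t = u" using X3 xu nl unfolding nbrs_def NL_def by auto
          hence "x \<in> nbrs E X u" using nbrs_sym[of t E X x] t xX by (auto simp: nbrs_Diff)
          thus "t \<in> {}" using nu xw by simp
        qed
        have "matching E (X - {w})"
        proof (rule matchingI)
          fix s assume "s \<in> X - {w}"
          hence "s = u \<or> s = x" using X3 by auto
          thus "\<exists>c. nbrs E (X - {w}) s \<subseteq> {c}" using nXu nXx by auto
        qed
        hence spd: "spiderP E X w" unfolding spiderP_def using wX u uw nXu by auto
        have "fib_index X E = gg (card X) (stab_num X E)" using tree_spider_F[OF f nl c ac spd] .
      thus ?thesis using abnd spd by (simp add: exI[of _ w])
      next
        case False
        have cT2: "2 \<le> card T"
        proof -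
          have "card T \<noteq> 0" using xT fT by auto
          thus ?thesis using False by simp
        qed
        have ltT: "card T < card X" using cXT by simp
        have acT: "\<not> has_cycle T E" using acs[of T] T_def by blast
        have acTx: "\<not> has_cycle (T - {x}) E" using acs[of "T - {x}"] T_def by blast
        have cYc: "conn E Y" using conn_del_leaf[OF c u nu] Y_def by simp
        have cTc: "conn E T" using conn_del_leaf[OF cYc wY nYw] eYT by simp
        have IHT: "fib_index T E \<le> gg (card T) (stab_num T E) \<and> stab_num T E + 1 \<le> card T"
          using less(1)[OF ltT fT nl cTc acT cT2] by blast
        have FLT: "card T \<le> 2 * stab_num T E" using FL[OF fT nl acT] by blast
        have fTx: "finite (T - {x})" using fT by simp
        have FLTx: "card (T - {x}) \<le> 2 * stab_num (T - {x}) E \<and>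
           fib_index (T - {x}) E \<le> hh (card (T - {x})) (stab_num (T - {x}) E) \<and>
           (fib_index (T - {x}) E = hh (card (T - {x})) (stab_num (T - {x}) E) \<longrightarrow> matching E (T - {x}))"
          using FL[OF fTx nl acTx] .
        define m where "m = card T"
        define a' where "a' = stab_num T E"
        define b' where "b' = stab_num (T - {x}) E"
        have cTx: "card (T - {x}) = m - 1" using m_def xT fT by simp
        have bl: "b' \<le> a'" unfolding a'_def b'_def using fT by (intro stab_mono) auto
        have h1: "m \<le> 2 * a'" using FLT m_def a'_def by simp
        have h2: "a' + 1 \<le> m" using IHT m_def a'_def by simp
        have hb: "m - 1 \<le> 2 * b'" using FLTx cTx b'_def by simp
        have hm: "hh (m-1) b' \<le> hh (m-1) a'" using hh_mono[OF hb bl] h2 by simp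
        have num: "2 * gg m a' + hh (m-1) a' = gg (m+2) (a'+1)" using caseB_num[OF h1 h2] .
        have FTx: "fib_index (T - {x}) E \<le> hh (m-1) b'" using FLTx cTx b'_def by simp
        have FT: "fib_index T E \<le> gg m a'" using IHT m_def a'_def by simp
        have le: "fib_index X E \<le> gg (card X) (stab_num X E)"
          using FX FTx FT hm num cXT aX m_def a'_def by simp
        have sp: "\<exists>v. spiderP E X v" if eq: "fib_index X E = gg (card X) (stab_num X E)"
        proof -
          have eqTx: "fib_index (T - {x}) E = hh (m-1) a'"
            using eq FX FTx FT hm num cXT aX m_def a'_def by simp
          have ba: "b' = a'"
          proof (rule ccontr)
            assume "b' \<noteq> a'"
            hence "b' < a'" using bl by simp
            hence "hh (m-1) b' < hh (m-1) a'" using hh_mono_strict[OF hb] h2 by simp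
            thus False using FTx eqTx by simp
          qed
          have mTx: "matching E (T - {x})" using FLTx eqTx cTx ba b'_def by simp
          have other: "nbrs E (X - {x}) s = nbrs E (T - {x}) s" if s: "s \<in> T - {x}" for s
          proof -
            have sX: "s \<in> X" "s \<noteq> u" "s \<noteq> w" "s \<noteq> x" using s T_def by auto
            have "u \<notin> nbrs E X s" using nbrs_sym[of u E X s] nu sX by auto
            moreover have "w \<notin> nbrs E X s" using nbrs_sym[of w E X s] nw sX by auto
            ultimately show ?thesis unfolding T_def nbrs_Diff by auto
          qed
          have mXx: "matching E (X - {x})"
          proof (rule matchingI)
            fix s assume s: "s \<in> X - {x}"
            show "\<exists>c. nbrs E (X - {x}) s \<subseteq> {c}"
            proof (cases "s = u \<or> s = w")
              case True thus ?thesis using nu nw by (auto simp: nbrs_Diff)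
            next
              case False
              hence sT: "s \<in> T - {x}" using s T_def by auto
              thus ?thesis using other[OF sT] mTx unfolding matching_def by blast
            qed
          qed
          have iso: "\<exists>y\<in>X - {x}. nbrs E (X - {x}) y = {}"
          proof (rule ccontr)
            assume noiso: "\<not> ?thesis"
            have mT': "matching E (T - {x})" using mTx .
            have spT: "spid E T x" using tree_spid[OF fT nl cTc acT xT mT'] .
            have "Sh E T x = {}"
            proof -
              have "y \<notin> Sh E T x" for y
              proof
                assume "y \<in> Sh E T x"
                hence y: "y \<in> T - {x}" "nbrs E (T - {x}) y = {}" unfolding Sh_def by auto
                have "y \<in> X - {x}" using y T_def by auto
                thus False using noiso other[OF y(1)] y(2) by auto
              qed
              thus ?thesis by blast
            qed
            hence "stab_num T E = 1 + card (Fa E T x)" "stab_num (T - {x}) E = card (Fa E T x)"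
              using spid_stab[OF spT] stab_rest[OF spT] by auto
            thus False using ba a'_def b'_def by simp
          qed
          show ?thesis using mXx iso xX unfolding spiderP_def by blast
        qed
        show ?thesis using le sp abnd by blast
      qed
    qed
  qed
qed

context
  fixes n a :: nat
  assumes h1: "n \<le> 2*a" and h2: "a \<le> n - 1" and h3: "2 \<le> n"
begin

lemma a_pos: "1 \<le> a" using h1 h3 by linarith
lemma a_lt: "a < n" using h2 h3 by linarith

lemma tcs: "i < a \<Longrightarrow> tc_size n a i = (if i < n - a then 2 else 1)"
proof (cases "n = 2*a")
  case True
  hence "n div a = 2" "n mod a = 0" using a_pos by auto
  moreover have "n - a = a" using True by simp
  moreover assume "i < a"
  ultimately show ?thesis unfolding tc_size_def by simp
next
  case False
  hence lt: "n - a < a" using h1 by linarith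
  have "n div a = Suc ((n - a) div a)" using a_pos a_lt by (intro le_div_geq) auto
  hence d: "n div a = 1" using lt by simp
  have "n mod a = (n - a) mod a" using a_lt by (intro le_mod_geq) auto
  hence m: "n mod a = n - a" using lt by simp
  show ?thesis unfolding tc_size_def d m by simp
qed

lemma TCV: "TC_V n a = {(i,j). i < a \<and> (j = 0 \<or> (j = 1 \<and> i < n - a))}"
proof -
  have "(i,j) \<in> TC_V n a \<longleftrightarrow> i < a \<and> (j = 0 \<or> (j = 1 \<and> i < n - a))" for i j
    unfolding TC_V_def using tcs[of i] by (auto split: if_splits)
  thus ?thesis by auto
qed

lemma TCadj: "{p,q} \<in> TC_E n a \<longleftrightarrow> p \<in> TC_V n a \<and> q \<in> TC_V n a \<and> p \<noteq> q \<and>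
   (fst p = fst q \<or> (p = (0,0) \<and> snd q = 0) \<or> (q = (0,0) \<and> snd p = 0))"
proof
  assume e: "{p,q} \<in> TC_E n a"
  show "p \<in> TC_V n a \<and> q \<in> TC_V n a \<and> p \<noteq> q \<and>
   (fst p = fst q \<or> (p = (0,0) \<and> snd q = 0) \<or> (q = (0,0) \<and> snd p = 0))"
  proof (cases "{p,q} \<in> {{(i, j), (i, j')} | i j j'. (i, j) \<in> TC_V n a \<and> (i, j') \<in> TC_V n a \<and> j \<noteq> j'}")
    case True
    then obtain i j j' where ij: "{p,q} = {(i, j), (i, j')}" "(i, j) \<in> TC_V n a" "(i, j') \<in> TC_V n a" "j \<noteq> j'"
      by blast
    from ij(1) have "(p = (i,j) \<and> q = (i,j')) \<or> (p = (i,j') \<and> q = (i,j))" by (simp add: doubleton_eq_iff)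
    thus ?thesis using ij(2-4) by auto
  next
    case False
    hence "{p,q} \<in> {{(0, 0), (i, 0)} | i. 0 < i \<and> i < a}" using e unfolding TC_E_def by blast
    then obtain i where ij: "{p,q} = {(0, 0), (i, 0)}" "0 < i" "i < a" by blast
    from ij(1) have "(p = (0,0) \<and> q = (i,0)) \<or> (p = (i,0) \<and> q = (0,0))" by (simp add: doubleton_eq_iff)
    moreover have "(0::nat,0::nat) \<in> TC_V n a" "(i,0) \<in> TC_V n a" using ij a_pos unfolding TCV by auto
    ultimately show ?thesis using ij(2,3) by auto
  qed
next
  assume r: "p \<in> TC_V n a \<and> q \<in> TC_V n a \<and> p \<noteq> q \<and>
   (fst p = fst q \<or> (p = (0,0) \<and> snd q = 0) \<or> (q = (0,0) \<and> snd p = 0))"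
  obtain i j where p: "p = (i,j)" by (cases p)
  obtain i' j' where q: "q = (i',j')" by (cases q)
  show "{p,q} \<in> TC_E n a"
  proof (cases "fst p = fst q")
    case True
    hence ii: "i = i'" "j \<noteq> j'" using p q r by auto
    have m: "(i,j) \<in> TC_V n a" "(i,j') \<in> TC_V n a" using r p q ii by auto
    show ?thesis unfolding TC_E_def p q ii(1)[symmetric]
      apply (rule UnI1, rule CollectI)
      apply (rule exI[of _ i], rule exI[of _ j], rule exI[of _ j'])
      using m ii by simp
  next
    case False
    hence "(p = (0,0) \<and> snd q = 0) \<or> (q = (0,0) \<and> snd p = 0)" using r by blast
    thus ?thesis
    proof
      assume c: "p = (0,0) \<and> snd q = 0"
      hence qq: "q = (i', 0)" "0 < i'" "i' < a" using q r False unfolding TCV by auto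
      show ?thesis unfolding TC_E_def c[THEN conjunct1] qq(1)
        apply (rule UnI2, rule CollectI)
        apply (rule exI[of _ i'])
        using qq by simp
    next
      assume c: "q = (0,0) \<and> snd p = 0"
      hence "p = (i, 0)" "0 < i" "i < a" using p r False unfolding TCV by auto
      hence pq: "{p,q} = {(0,0),(i,0)}" using c by auto
      show ?thesis unfolding TC_E_def pq
        apply (rule UnI2, rule CollectI)
        apply (rule exI[of _ i])
        using \<open>0 < i\<close> \<open>i < a\<close> by simp
    qed
  qed
qed

lemma TC_spid: "spid (TC_E n a) (TC_V n a) (0,0)"
  unfolding spid_def
proof (intro conjI ballI impI)
  show "finite (TC_V n a)"
    by (rule finite_subset[of _ "{..<a} \<times> {..<2}"]) (auto simp: TCV)
  show "NL (TC_E n a)" unfolding NL_def using TCadj by (metis insert_absorb2)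
  show "(0,0) \<in> TC_V n a" using a_pos by (simp add: TCV)
  show "matching (TC_E n a) (TC_V n a - {(0, 0)})"
  proof (rule matchingI)
    fix y assume y: "y \<in> TC_V n a - {(0, 0)}"
    have "nbrs (TC_E n a) (TC_V n a - {(0, 0)}) y \<subseteq> {(fst y, 1 - snd y)}"
    proof
      fix t assume "t \<in> nbrs (TC_E n a) (TC_V n a - {(0, 0)}) y"
      hence t: "t \<in> TC_V n a" "t \<noteq> (0,0)" "{y,t} \<in> TC_E n a" unfolding nbrs_def by auto
      hence "fst y = fst t" "y \<noteq> t" using TCadj y by auto
      moreover have "snd y \<le> 1" "snd t \<le> 1" using y t unfolding TCV by auto
      ultimately show "t \<in> {(fst y, 1 - snd y)}" by (cases y, cases t) auto
    qed
    thus "\<exists>c. nbrs (TC_E n a) (TC_V n a - {(0, 0)}) y \<subseteq> {c}" by blast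
  qed
next
  fix y assume y: "y \<in> TC_V n a - {(0, 0)}"
  show "{(0, 0), y} \<in> TC_E n a \<or> (\<exists>z\<in>TC_V n a - {(0, 0)}. {(0, 0), z} \<in> TC_E n a \<and> {z, y} \<in> TC_E n a)"
  proof (cases "fst y = 0 \<or> snd y = 0")
    case True
    hence "{(0, 0), y} \<in> TC_E n a" using y a_pos unfolding TCadj by (auto simp: TCV)
    thus ?thesis by blast
  next
    case False
    obtain i j where yij: "y = (i,j)" by (cases y)
    hence ij: "i \<noteq> 0" "j = 1" "i < a" "i < n - a" using y False unfolding TCV by auto
    have z: "(i,0) \<in> TC_V n a - {(0, 0)}" using ij unfolding TCV by auto
    have "{(0, 0), (i,0)} \<in> TC_E n a" using z a_pos unfolding TCadj by (auto simp: TCV)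
    moreover have "{(i,0), y} \<in> TC_E n a" using z y ij yij unfolding TCadj by auto
    ultimately show ?thesis using z by blast
  qed
next
  fix y z assume y: "y \<in> TC_V n a - {(0, 0)}" and z: "z \<in> TC_V n a - {(0, 0)}"
    and vy: "{(0, 0), y} \<in> TC_E n a" and vz: "{(0, 0), z} \<in> TC_E n a"
  show "{y, z} \<notin> TC_E n a"
  proof
    assume yz: "{y, z} \<in> TC_E n a"
    have a1: "fst y = 0 \<or> snd y = 0" using vy y TCadj by auto
    have a2: "fst z = 0 \<or> snd z = 0" using vz z TCadj by auto
    have a3: "fst y = fst z" "y \<noteq> z" using yz y z TCadj by auto
    have b: "snd y \<le> 1" "snd z \<le> 1" using y z unfolding TCV by auto
    have c: "y \<noteq> (0,0)" "z \<noteq> (0,0)" using y z by auto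
    show False using a1 a2 a3 b c by (cases y, cases z) auto
  qed
qed

lemma TC_Sh: "(0,1) \<in> Sh (TC_E n a) (TC_V n a) (0,0)"
proof -
  have v: "(0::nat,1::nat) \<in> TC_V n a - {(0,0)}" using a_pos a_lt unfolding TCV by auto
  have "nbrs (TC_E n a) (TC_V n a - {(0, 0)}) (0,1) = {}"
  proof -
    have "t \<notin> nbrs (TC_E n a) (TC_V n a - {(0, 0)}) (0,1)" for t
    proof
      assume "t \<in> nbrs (TC_E n a) (TC_V n a - {(0, 0)}) (0,1)"
      hence t: "t \<in> TC_V n a" "t \<noteq> (0,0)" "{(0,1),t} \<in> TC_E n a" unfolding nbrs_def by auto
      hence "fst t = 0" "t \<noteq> (0,1)" using TCadj by auto
      moreover have "snd t \<le> 1" using t unfolding TCV by auto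
      ultimately show False using t(2) by (cases t) auto
    qed
    thus ?thesis by blast
  qed
  thus ?thesis using v unfolding Sh_def by simp
qed

lemma TC_card: "card (TC_V n a) = n"
proof -
  have "TC_V n a = ({..<a} \<times> {0}) \<union> ({..<n-a} \<times> {1})" unfolding TCV using h1 by auto
  moreover have "card (({..<a} \<times> {0}) \<union> ({..<n-a} \<times> {1::nat})) = a + (n - a)"
    by (subst card_Un_disjoint) (auto simp: card_cartesian_product)
  ultimately show ?thesis using a_lt by simp
qed

lemma TC_Fa: "card (Fa (TC_E n a) (TC_V n a) (0,0)) = n - a - 1"
proof -
  have "Fa (TC_E n a) (TC_V n a) (0,0) = (\<lambda>i. (i, 1::nat)) ` {1..<n-a}"
  proof (rule set_eqI)
    fix y :: "nat \<times> nat"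
    obtain i j where y: "y = (i,j)" by (cases y)
    show "y \<in> Fa (TC_E n a) (TC_V n a) (0,0) \<longleftrightarrow> y \<in> (\<lambda>i. (i, 1::nat)) ` {1..<n-a}"
      unfolding Fa_def y using TCadj[of "(0,0)" "(i,j)"] h1 a_pos by (auto simp: TCV)
  qed
  moreover have "inj_on (\<lambda>i. (i, 1::nat)) {1..<n-a}" by (simp add: inj_on_def)
  ultimately show ?thesis by (simp add: card_image)
qed

lemma TC_main: "stab_num (TC_V n a) (TC_E n a) = a \<and> fib_index (TC_V n a) (TC_E n a) = gg n a"
proof -
  have ne: "Sh (TC_E n a) (TC_V n a) (0,0) \<noteq> {}" using TC_Sh by blast
  note F = spid_F[OF TC_spid ne]
  note C = spid_card[OF TC_spid]
  have "stab_num (TC_V n a) (TC_E n a) = a" using F C TC_card TC_Fa h1 a_lt by simp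
  thus ?thesis using F TC_card by simp
qed

end

lemma EC:
  assumes sp: "spid E X v" and x: "x \<in> X" and y: "y \<in> X"
  shows "{x,y} \<in> E \<longleftrightarrow> (x = v \<and> y \<in> Sh E X v \<union> Ne E X v) \<or> (y = v \<and> x \<in> Sh E X v \<union> Ne E X v)
     \<or> (x \<in> Ne E X v \<and> y = pt E X v x) \<or> (y \<in> Ne E X v \<and> x = pt E X v y)"
    (is "?L \<longleftrightarrow> ?R")
proof
  assume e: ?L
  have nl: "NL E" using sp by (simp add: spid_def)
  have xy: "x \<noteq> y" using NL_ne[OF nl e] .
  show ?R
  proof (cases "x = v \<or> y = v")
    case True
    thus ?thesis
    proof
      assume xv: "x = v"
      hence "y \<in> X - {v}" "{v,y} \<in> E" using y xy e by auto
      hence "y \<notin> Fa E X v" unfolding Fa_def by simp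
      thus ?thesis using parts[OF sp] \<open>y \<in> X - {v}\<close> xv by blast
    next
      assume yv: "y = v"
      hence "x \<in> X - {v}" "{v,x} \<in> E" using x xy e by (auto simp: dsym)
      hence "x \<notin> Fa E X v" unfolding Fa_def by simp
      thus ?thesis using parts[OF sp] \<open>x \<in> X - {v}\<close> yv by blast
    qed
  next
    case False
    hence xX: "x \<in> X - {v}" and yX: "y \<in> X - {v}" using x y by auto
    have yn: "y \<in> nbrs E (X - {v}) x" using e yX unfolding nbrs_def by simp
    have xn: "x \<in> nbrs E (X - {v}) y" using nbrs_sym[OF yn xX] .
    have "x \<in> Sh E X v \<union> Ne E X v \<union> Fa E X v" using parts[OF sp] xX by blast
    moreover have "x \<notin> Sh E X v" using yn unfolding Sh_def by auto
    moreover have "x \<in> Ne E X v \<Longrightarrow> ?thesis" using Ne_partner[OF sp] yn by auto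
    moreover have "x \<in> Fa E X v \<Longrightarrow> ?thesis"
    proof -
      assume xF: "x \<in> Fa E X v"
      then obtain z where z: "nbrs E (X - {v}) x = {z}" "z \<in> Ne E X v" using Fa_partner[OF sp] by blast
      hence yz: "y = z" using yn by simp
      have "x = pt E X v y" using Ne_partner[OF sp z(2)] xn yz by simp
      thus ?thesis using z(2) yz by blast
    qed
    ultimately show ?thesis by blast
  qed
next
  assume r: ?R
  show ?L
  proof -
    have c1: "{v,t} \<in> E" if "t \<in> Sh E X v \<union> Ne E X v" for t
      using that Sh_adj[OF sp] unfolding Ne_def by blast
    have c2: "{t, pt E X v t} \<in> E" if "t \<in> Ne E X v" for t
      using Ne_partner[OF sp that] unfolding nbrs_def by auto
    from r show ?thesis
    proof (elim disjE conjE)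
      assume "x = v" "y \<in> Sh E X v \<union> Ne E X v" thus ?thesis using c1 by simp
    next
      assume "y = v" "x \<in> Sh E X v \<union> Ne E X v" thus ?thesis using c1 dsym by metis
    next
      assume "x \<in> Ne E X v" "y = pt E X v x" thus ?thesis using c2 by simp
    next
      assume "y \<in> Ne E X v" "x = pt E X v y" thus ?thesis using c2 dsym by metis
    qed
  qed
qed

lemma spid_iso:
  assumes sp: "spid E X v" and sp': "spid E' X' v'"
    and cs: "card (Sh E X v) = card (Sh E' X' v')" and cf: "card (Fa E X v) = card (Fa E' X' v')"
  shows "graph_iso X E X' E'"
proof -
  let ?S = "Sh E X v" and ?N = "Ne E X v" and ?F = "Fa E X v" and ?p = "pt E X v"
  let ?S' = "Sh E' X' v'" and ?N' = "Ne E' X' v'" and ?F' = "Fa E' X' v'" and ?p' = "pt E' X' v'"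
  have cn: "card ?N = card ?N'" using card_Ne[OF sp] card_Ne[OF sp'] cf by simp
  obtain \<sigma> where \<sigma>: "bij_betw \<sigma> ?S ?S'" using finite_same_card_bij[OF fins(1)[OF sp] fins(1)[OF sp'] cs] by blast
  obtain \<tau> where \<tau>: "bij_betw \<tau> ?N ?N'" using finite_same_card_bij[OF fins(2)[OF sp] fins(2)[OF sp'] cn] by blast
  define f where "f y = (if y = v then v' else if y \<in> ?S then \<sigma> y else if y \<in> ?N then \<tau> y
      else ?p' (\<tau> (inv_into ?N ?p y)))" for y
  have pb: "bij_betw ?p ?N ?F" using pt_bij[OF sp] .
  have pb': "bij_betw ?p' ?N' ?F'" using pt_bij[OF sp'] .
  have v: "v \<in> X" using sp by (simp add: spid_def)
  have v': "v' \<in> X'" using sp' by (simp add: spid_def)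
  have vS: "v \<notin> ?S" "v \<notin> ?N" "v \<notin> ?F" unfolding Sh_def Ne_def Fa_def by auto
  have vS': "v' \<notin> ?S'" "v' \<notin> ?N'" "v' \<notin> ?F'" unfolding Sh_def Ne_def Fa_def by auto
  note dj = parts_disj[OF sp] and dj' = parts_disj[OF sp']
  have Xp: "X = insert v (?S \<union> ?N \<union> ?F)" using parts[OF sp] v by blast
  have Xp': "X' = insert v' (?S' \<union> ?N' \<union> ?F')" using parts[OF sp'] v' by blast
  have fv: "f v = v'" unfolding f_def by simp
  have fS: "y \<in> ?S \<Longrightarrow> f y = \<sigma> y" for y using vS unfolding f_def by auto
  have fN: "y \<in> ?N \<Longrightarrow> f y = \<tau> y" for y using vS dj unfolding f_def by auto
  have fF: "y \<in> ?F \<Longrightarrow> f y = ?p' (\<tau> (inv_into ?N ?p y))" for y using vS dj unfolding f_def by auto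
  have fpt: "z \<in> ?N \<Longrightarrow> f (?p z) = ?p' (f z)" for z
  proof -
    assume z: "z \<in> ?N"
    have pz: "?p z \<in> ?F" using pb z by (auto simp: bij_betw_def)
    have "inv_into ?N ?p (?p z) = z" using pb z by (simp add: bij_betw_def inv_into_f_f)
    thus ?thesis using fF[OF pz] fN[OF z] by simp
  qed
  have mS: "y \<in> ?S \<Longrightarrow> f y \<in> ?S'" for y using fS \<sigma> by (auto simp: bij_betw_def)
  have mN: "y \<in> ?N \<Longrightarrow> f y \<in> ?N'" for y using fN \<tau> by (auto simp: bij_betw_def)
  have mF: "y \<in> ?F \<Longrightarrow> f y \<in> ?F'" for y
  proof -
    assume y: "y \<in> ?F"
    have "inv_into ?N ?p y \<in> ?N" using pb y by (metis bij_betw_def inv_into_into)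
    hence "\<tau> (inv_into ?N ?p y) \<in> ?N'" using \<tau> by (auto simp: bij_betw_def)
    hence "?p' (\<tau> (inv_into ?N ?p y)) \<in> ?F'" using pb' by (auto simp: bij_betw_def)
    thus ?thesis using fF[OF y] by simp
  qed
  have c4: "y = v \<or> y \<in> ?S \<or> y \<in> ?N \<or> y \<in> ?F" if "y \<in> X" for y
    using that Xp by auto
  have c4': "y = v' \<or> y \<in> ?S' \<or> y \<in> ?N' \<or> y \<in> ?F'" if "y \<in> X'" for y
    using that Xp' by auto
  have inX': "y \<in> ?S' \<or> y \<in> ?N' \<or> y \<in> ?F' \<Longrightarrow> y \<in> X'" for y using Xp' by auto
  have inX: "y \<in> ?S \<or> y \<in> ?N \<or> y \<in> ?F \<Longrightarrow> y \<in> X" for y using Xp by auto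
  have img: "f ` X = X'"
  proof
    show "f ` X \<subseteq> X'"
    proof
      fix y' assume "y' \<in> f ` X"
      then obtain y where y: "y \<in> X" "y' = f y" by blast
      from c4[OF y(1)] show "y' \<in> X'"
      proof (elim disjE)
        assume "y = v" thus ?thesis using y fv v' by simp
      next
        assume "y \<in> ?S" thus ?thesis using y mS inX' by blast
      next
        assume "y \<in> ?N" thus ?thesis using y mN inX' by blast
      next
        assume "y \<in> ?F" thus ?thesis using y mF inX' by blast
      qed
    qed
    show "X' \<subseteq> f ` X"
    proof
      fix y' assume y': "y' \<in> X'"
      from c4'[OF y'] show "y' \<in> f ` X"
      proof (elim disjE)
        assume "y' = v'" thus ?thesis using fv v by (metis image_eqI)
      next
        assume "y' \<in> ?S'"
        then obtain y where "y \<in> ?S" "y' = \<sigma> y" using \<sigma> by (auto simp: bij_betw_def)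
        thus ?thesis using fS inX by (metis image_eqI)
      next
        assume "y' \<in> ?N'"
        then obtain y where "y \<in> ?N" "y' = \<tau> y" using \<tau> by (auto simp: bij_betw_def)
        thus ?thesis using fN inX by (metis image_eqI)
      next
        assume "y' \<in> ?F'"
        then obtain z' where z': "z' \<in> ?N'" "y' = ?p' z'" using pb' by (auto simp: bij_betw_def)
        then obtain z where z: "z \<in> ?N" "z' = \<tau> z" using \<tau> by (auto simp: bij_betw_def)
        have "f (?p z) = y'" using fpt[OF z(1)] fN[OF z(1)] z z' by simp
        moreover have "?p z \<in> ?F" using pb z(1) by (auto simp: bij_betw_def)
        hence "?p z \<in> X" using inX by blast
        ultimately show ?thesis by (metis image_eqI)
      qed
    qed
  qed
  have cX: "card X = card X'" using spid_card[OF sp] spid_card[OF sp'] cs cf by simp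
  have fX: "finite X" using sp by (simp add: spid_def)
  have inj: "inj_on f X" using img cX fX by (simp add: inj_on_iff_eq_card)
  have bij: "bij_betw f X X'" using inj img by (simp add: bij_betw_def)
  have catv: "f y = v' \<longleftrightarrow> y = v" if y: "y \<in> X" for y
    using c4[OF y]
  proof (elim disjE)
    assume "y = v" thus ?thesis using fv by simp
  next
    assume a: "y \<in> ?S" hence "f y \<noteq> v'" using mS vS' by metis
    thus ?thesis using a vS by metis
  next
    assume a: "y \<in> ?N" hence "f y \<noteq> v'" using mN vS' by metis
    thus ?thesis using a vS by metis
  next
    assume a: "y \<in> ?F" hence "f y \<noteq> v'" using mF vS' by metis
    thus ?thesis using a vS by metis
  qed
  have catSN: "f y \<in> ?S' \<union> ?N' \<longleftrightarrow> y \<in> ?S \<union> ?N" if y: "y \<in> X" for y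
  proof -
    have "?F' \<inter> (?S' \<union> ?N') = {}" using dj' by blast
    thus ?thesis using c4[OF y] fv mS mN mF vS' by blast
  qed
  have catN: "f y \<in> ?N' \<longleftrightarrow> y \<in> ?N" if y: "y \<in> X" for y
  proof -
    have "?F' \<inter> ?N' = {}" "?S' \<inter> ?N' = {}" using dj' by blast+
    thus ?thesis using c4[OF y] fv mS mN mF vS' by blast
  qed
  have "\<forall>x\<in>X. \<forall>y\<in>X. {x, y} \<in> E \<longleftrightarrow> {f x, f y} \<in> E'"
  proof (intro ballI)
    fix x y assume x: "x \<in> X" and y: "y \<in> X"
    have fx: "f x \<in> X'" and fy: "f y \<in> X'" using img x y by auto
    have pN: "z \<in> ?N \<Longrightarrow> ?p z \<in> X" for z using pb Xp by (auto simp: bij_betw_def)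
    have e1: "(x \<in> ?N \<and> y = ?p x) \<longleftrightarrow> (f x \<in> ?N' \<and> f y = ?p' (f x))"
    proof
      assume "x \<in> ?N \<and> y = ?p x" thus "f x \<in> ?N' \<and> f y = ?p' (f x)" using fpt catN x by auto
    next
      assume a: "f x \<in> ?N' \<and> f y = ?p' (f x)"
      hence xN: "x \<in> ?N" using catN x by simp
      hence "f y = f (?p x)" using a fpt by simp
      thus "x \<in> ?N \<and> y = ?p x" using inj y pN[OF xN] xN by (auto simp: inj_on_def)
    qed
    have e2: "(y \<in> ?N \<and> x = ?p y) \<longleftrightarrow> (f y \<in> ?N' \<and> f x = ?p' (f y))"
    proof
      assume "y \<in> ?N \<and> x = ?p y" thus "f y \<in> ?N' \<and> f x = ?p' (f y)" using fpt catN y by auto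
    next
      assume a: "f y \<in> ?N' \<and> f x = ?p' (f y)"
      hence yN: "y \<in> ?N" using catN y by simp
      hence "f x = f (?p y)" using a fpt by simp
      thus "y \<in> ?N \<and> x = ?p y" using inj x pN[OF yN] yN by (auto simp: inj_on_def)
    qed
    have a1: "(x = v \<and> y \<in> ?S \<union> ?N) \<longleftrightarrow> (f x = v' \<and> f y \<in> ?S' \<union> ?N')"
      using catv[OF x] catSN[OF y] by simp
    have a2: "(y = v \<and> x \<in> ?S \<union> ?N) \<longleftrightarrow> (f y = v' \<and> f x \<in> ?S' \<union> ?N')"
      using catv[OF y] catSN[OF x] by simp
    show "{x, y} \<in> E \<longleftrightarrow> {f x, f y} \<in> E'"
      unfolding EC[OF sp x y] EC[OF sp' fx fy] using a1 a2 e1 e2 by argo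
  qed
  thus ?thesis unfolding graph_iso_def using bij by (intro exI[of _ f]) simp
qed

lemma iso_fib:
  assumes "graph_iso V E V' E'"
  shows "fib_index V E = fib_index V' E'"
proof -
  obtain f where bij: "bij_betw f V V'" and ed: "\<forall>x\<in>V. \<forall>y\<in>V. {x, y} \<in> E \<longleftrightarrow> {f x, f y} \<in> E'"
    using assms unfolding graph_iso_def by blast
  have inj: "inj_on f V" and img: "f ` V = V'" using bij by (auto simp: bij_betw_def)
  have eq: "{S'. stable_set V' E' S'} = image f ` {S. stable_set V E S}"
  proof
    show "{S'. stable_set V' E' S'} \<subseteq> image f ` {S. stable_set V E S}"
    proof
      fix S' assume S': "S' \<in> {S'. stable_set V' E' S'}"
      define S where "S = {x \<in> V. f x \<in> S'}"
      have "f ` S = S'" using S' img unfolding S_def stable_set_def by auto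
      moreover have "stable_set V E S" using S' ed unfolding S_def stable_set_def by auto
      ultimately show "S' \<in> image f ` {S. stable_set V E S}" by blast
    qed
    show "image f ` {S. stable_set V E S} \<subseteq> {S'. stable_set V' E' S'}"
      using ed img unfolding stable_set_def by blast
  qed
  have "inj_on (image f) {S. stable_set V E S}"
    using inj_on_image_Pow[OF inj] unfolding stable_set_def by (auto simp: inj_on_def)
  thus ?thesis unfolding fib_index_def eq by (simp add: card_image)
qed

lemma conn_of_connected:
  assumes sg: "simple_graph V E" and c: "connected_graph V E"
  shows "conn E V"
proof -
  have "(RR E V)\<^sup>*\<^sup>* x y" if "(\<lambda>a b. {a, b} \<in> E)\<^sup>*\<^sup>* x y" "x \<in> V" for x y
    using that
  proof (induction rule: rtranclp_induct)
    case base thus ?case by simp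
  next
    case (step y z)
    have "{y,z} \<subseteq> V" using step(2) sg unfolding simple_graph_def by blast
    hence "RR E V y z" using step(2) unfolding RR_def by simp
    thus ?case using step(3,4) by (meson rtranclp.rtrancl_into_rtrancl)
  qed
  thus ?thesis using c unfolding connected_graph_def conn_def by blast
qed

lemma NL_of_simple: "simple_graph V E \<Longrightarrow> NL E"
  unfolding simple_graph_def NL_def by force

theorem mainTheorem10:
  fixes V :: "'a set" and E :: "'a set set" and n \<alpha> :: nat
  assumes "is_tree V E"
    and "card V = n" and "n \<ge> 2"
    and "stab_num V E = \<alpha>"
  shows "fib_index V E \<le> 3 ^ (n - \<alpha> - 1) * 2 ^ (2 * \<alpha> - n + 1) + 2 ^ (n - \<alpha> - 1)
    \<and> (fib_index V E = 3 ^ (n - \<alpha> - 1) * 2 ^ (2 * \<alpha> - n + 1) + 2 ^ (n - \<alpha> - 1)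
           \<longleftrightarrow> graph_iso V E (TC_V n \<alpha>) (TC_E n \<alpha>))
    \<and> (\<forall>a. n \<le> 2 * a \<and> a \<le> n - 1 \<longrightarrow>
           f_TC n a = 3 ^ (n - a - 1) * 2 ^ (2 * a - n + 1) + 2 ^ (n - a - 1))"
proof -
  have sg: "simple_graph V E" and cg: "connected_graph V E" and ac: "\<not> has_cycle V E"
    using assms(1) unfolding is_tree_def by auto
  have f: "finite V" using sg unfolding simple_graph_def by simp
  have nl: "NL E" using NL_of_simple[OF sg] .
  have c: "conn E V" using conn_of_connected[OF sg cg] .
  have two: "2 \<le> card V" using assms(2,3) by simp
  note T = TL[OF f nl c ac two]
  note FLV = FL[OF f nl ac]
  have bnd: "fib_index V E \<le> gg n \<alpha>" using T assms(2,4) by simp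
  have "\<alpha> + 1 \<le> n" using T assms(2,4) by simp
  hence a1: "\<alpha> \<le> n - 1" by simp
  have a2: "n \<le> 2 * \<alpha>" using FLV assms(2,4) by simp
  have third: "\<forall>a. n \<le> 2 * a \<and> a \<le> n - 1 \<longrightarrow> f_TC n a = gg n a"
    using TC_main assms(3) unfolding f_TC_def by blast
  have iff: "fib_index V E = gg n \<alpha> \<longleftrightarrow> graph_iso V E (TC_V n \<alpha>) (TC_E n \<alpha>)"
  proof
    assume eq: "fib_index V E = gg n \<alpha>"
    then obtain v where sP: "spiderP E V v" using T assms(2,4) by auto
    have v: "v \<in> V" and m: "matching E (V - {v})" and i: "\<exists>y\<in>V - {v}. nbrs E (V - {v}) y = {}"
      using sP unfolding spiderP_def by auto
    have sp: "spid E V v" using tree_spid[OF f nl c ac v m] .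
    have ne: "Sh E V v \<noteq> {}" using i unfolding Sh_def by blast
    have st: "\<alpha> = card (Sh E V v) + card (Fa E V v)" using spid_F[OF sp ne] assms(4) by simp
    have cd: "n = 1 + card (Sh E V v) + 2 * card (Fa E V v)" using spid_card[OF sp] assms(2) by simp
    have sp': "spid (TC_E n \<alpha>) (TC_V n \<alpha>) (0,0)" using TC_spid[OF a2 a1 assms(3)] .
    have cd': "n = 1 + card (Sh (TC_E n \<alpha>) (TC_V n \<alpha>) (0,0)) + 2 * card (Fa (TC_E n \<alpha>) (TC_V n \<alpha>) (0,0))"
      using spid_card[OF sp'] TC_card[OF a2 a1 assms(3)] by simp
    have fa': "card (Fa (TC_E n \<alpha>) (TC_V n \<alpha>) (0,0)) = n - \<alpha> - 1" using TC_Fa[OF a2 a1 assms(3)] .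
    have cf: "card (Fa E V v) = card (Fa (TC_E n \<alpha>) (TC_V n \<alpha>) (0,0))" using st cd fa' by simp
    have cs: "card (Sh E V v) = card (Sh (TC_E n \<alpha>) (TC_V n \<alpha>) (0,0))" using cd cd' cf by simp
    show "graph_iso V E (TC_V n \<alpha>) (TC_E n \<alpha>)" using spid_iso[OF sp sp' cs cf] .
  next
    assume "graph_iso V E (TC_V n \<alpha>) (TC_E n \<alpha>)"
    hence "fib_index V E = fib_index (TC_V n \<alpha>) (TC_E n \<alpha>)" by (rule iso_fib)
    thus "fib_index V E = gg n \<alpha>" using TC_main[OF a2 a1 assms(3)] by simp
  qed
  show ?thesis using bnd iff third unfolding gg_def by simp
qed

end
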